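(* Let $V=\{1,\dots,N\}$, $V^{\mathrm{abs}}=\{0,N+1\}$, $V^*=V\cup V^{\mathrm{abs}}$, and let $\{\eta(t),t\ge0\}$ be a consistent configuration process on $V^*$ with generator $\mathcal L^{\mathrm{abs}}=\mathcal L+\mathcal H$. Let $G(\eta,z)=\mathbb E_\eta[z^{\eta_0(\infty)}]$, $G^{\mathrm{irw}}(\eta,z)=\mathbb E^{\mathrm{irw}}_\eta[z^{\eta_0(\infty)}]$, and $\mathcal G(\eta,z):=G(\eta,z)-G^{\mathrm{irw}}(\eta,z)$ for $z\ge0$. Then for all $\mathbf x=(x_1,\dots,x_n)\in(V^* )^n$, $$\mathcal G(\phi(\mathbf x),z)=\sum_{\kappa=2}^nz^{n-\kappa}(1-z)^\kappa\sum_{1\le i_1<\dots<i_\kappa\le n}\mathcal G(\phi(x_{i_1},\dots,x_{i_\kappa}),0),$$ where $\mathcal G(\eta,0)=\mathbb P_\eta(\eta_0(\infty)=0)-\mathbb P^{\mathrm{irw}}_\eta(\eta_0(\infty)=0)$.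
   Context: Rates $r(i,j)\ge0$ for $i\in V$, $j\in\{0,N+1\}$. $\mathcal L$ generates a configuration process on $V$ (single-site space $\Lambda\subseteq\mathbb N_0$), acting only on $(\eta_i)_{i\in V}$; $\mathcal Hf(\eta)=\sum_{i\in V,j\in V^{\mathrm{abs}}}r(i,j)\eta_i[f(\eta-\delta_i+\delta_j)-f(\eta)]$. Consistency: $[\mathcal L^{\mathrm{abs}},\mathcal A]=0$, $\mathcal Af(\eta)=\sum_{x\in V^*}\eta_xf(\eta-\delta_x)$. $\phi(\mathbf y)=\sum_i\delta_{y_i}$. The associated random walk $X^{\mathrm{rw}}$ on $V^*$ is the single-particle motion: if $\eta(0)=\delta_u$ then $\eta(t)=\delta_{X^{\mathrm{rw}}(t)}$. The independent-walker process $\eta^{\mathrm{irw}}$ is the configuration process of $n$ independent copies of $X^{\mathrm{rw}}$ (for every $n$), with law $\mathbb P^{\mathrm{irw}}_\eta$ and expectation $\mathbb E^{\mathrm{irw}}_\eta$ when started from $\eta$. $\eta_0(\infty)$ is the number of particles eventually absorbed at $0$ (limit $t\to\infty$); $G(\eta,0):=\lim_{z\to0}G(\eta,z)$. *)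

theory Defs
  imports "HOL-Analysis.Analysis"
begin

text \<open>Configurations on V* = {0..N+1}: functions nat => nat vanishing outside V*.
  Bulk V = {1..N}, absorbing sites 0 and N+1.  Lam is the single-site space on V.\<close>

type_synonym conf = "nat \<Rightarrow> nat"

definition valid :: "nat \<Rightarrow> nat set \<Rightarrow> conf \<Rightarrow> bool" where
  "valid N Lam \<eta> \<longleftrightarrow> (\<forall>y. y \<notin> {0..N+1} \<longrightarrow> \<eta> y = 0) \<and> (\<forall>i\<in>{1..N}. \<eta> i \<in> Lam)"

definition OmegaV :: "nat \<Rightarrow> nat set \<Rightarrow> nat \<Rightarrow> conf set" where
  "OmegaV N Lam m = {\<xi>. (\<forall>y. y \<notin> {1..N} \<longrightarrow> \<xi> y = 0) \<and> (\<forall>i\<in>{1..N}. \<xi> i \<in> Lam)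
                         \<and> (\<Sum>i\<in>{1..N}. \<xi> i) = m}"

definition restrV :: "nat \<Rightarrow> conf \<Rightarrow> conf" where
  "restrV N \<eta> = (\<lambda>y. if y \<in> {1..N} then \<eta> y else 0)"

definition absPart :: "nat \<Rightarrow> conf \<Rightarrow> conf" where
  "absPart N \<eta> = (\<lambda>y. if y \<in> {1..N} then 0 else \<eta> y)"

definition genL :: "nat \<Rightarrow> nat set \<Rightarrow> (conf \<Rightarrow> conf \<Rightarrow> real) \<Rightarrow> (conf \<Rightarrow> real) \<Rightarrow> conf \<Rightarrow> real" where
  "genL N Lam c f \<eta> =
     (\<Sum>\<xi>'\<in>OmegaV N Lam (\<Sum>i\<in>{1..N}. \<eta> i).
        c (restrV N \<eta>) \<xi>' * (f (\<lambda>y. \<xi>' y + absPart N \<eta> y) - f \<eta>))"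

definition genH :: "nat \<Rightarrow> (nat \<Rightarrow> nat \<Rightarrow> real) \<Rightarrow> (conf \<Rightarrow> real) \<Rightarrow> conf \<Rightarrow> real" where
  "genH N r f \<eta> =
     (\<Sum>i\<in>{1..N}. \<Sum>j\<in>{0, N+1}.
        r i j * real (\<eta> i) * (f (\<eta>(i := \<eta> i - 1, j := \<eta> j + 1)) - f \<eta>))"

definition genLabs :: "nat \<Rightarrow> nat set \<Rightarrow> (conf \<Rightarrow> conf \<Rightarrow> real) \<Rightarrow> (nat \<Rightarrow> nat \<Rightarrow> real)
     \<Rightarrow> (conf \<Rightarrow> real) \<Rightarrow> conf \<Rightarrow> real" where
  "genLabs N Lam c r f \<eta> = genL N Lam c f \<eta> + genH N r f \<eta>"

definition annihA :: "nat \<Rightarrow> (conf \<Rightarrow> real) \<Rightarrow> conf \<Rightarrow> real" where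
  "annihA N f \<eta> = (\<Sum>x\<in>{0..N+1}. real (\<eta> x) * f (\<eta>(x := \<eta> x - 1)))"

definition consistent :: "nat \<Rightarrow> nat set \<Rightarrow> (conf \<Rightarrow> conf \<Rightarrow> real) \<Rightarrow> (nat \<Rightarrow> nat \<Rightarrow> real) \<Rightarrow> bool" where
  "consistent N Lam c r \<longleftrightarrow>
     (\<forall>f \<eta>. valid N Lam \<eta> \<longrightarrow>
        genLabs N Lam c r (annihA N f) \<eta> = annihA N (genLabs N Lam c r f) \<eta>)"

text \<open>Markov semigroup e^{t Gen} (the process has finitely many states for a fixed
  particle number, so this is the matrix exponential of the generator).\<close>
definition semigroup :: "((conf \<Rightarrow> real) \<Rightarrow> conf \<Rightarrow> real) \<Rightarrow> real \<Rightarrow> (conf \<Rightarrow> real) \<Rightarrow> conf \<Rightarrow> real" where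
  "semigroup Gen t f \<eta> = (\<Sum>k. t ^ k / fact k * (Gen ^^ k) f \<eta>)"

text \<open>G(eta,z) = E_eta[z^{eta_0(infinity)}] = lim_{t->oo} E_eta[z^{eta_0(t)}]  (with 0^0 = 1).\<close>
definition absorb_gf :: "((conf \<Rightarrow> real) \<Rightarrow> conf \<Rightarrow> real) \<Rightarrow> conf \<Rightarrow> real \<Rightarrow> real" where
  "absorb_gf Gen \<eta> z = Lim at_top (\<lambda>t::real. semigroup Gen t (\<lambda>\<zeta>. z ^ \<zeta> 0) \<eta>)"

definition delta :: "nat \<Rightarrow> conf" where
  "delta u = (\<lambda>x. if x = u then 1 else 0)"

text \<open>Jump rate x -> y of the associated single-particle random walk X^rw.\<close>
definition rw_rate :: "nat \<Rightarrow> nat set \<Rightarrow> (conf \<Rightarrow> conf \<Rightarrow> real) \<Rightarrow> (nat \<Rightarrow> nat \<Rightarrow> real) \<Rightarrow> nat \<Rightarrow> nat \<Rightarrow> real" where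
  "rw_rate N Lam c r x y = genLabs N Lam c r (\<lambda>\<zeta>. if \<zeta> = delta y then 1 else 0) (delta x)"

definition genIRW :: "nat \<Rightarrow> nat set \<Rightarrow> (conf \<Rightarrow> conf \<Rightarrow> real) \<Rightarrow> (nat \<Rightarrow> nat \<Rightarrow> real)
     \<Rightarrow> (conf \<Rightarrow> real) \<Rightarrow> conf \<Rightarrow> real" where
  "genIRW N Lam c r f \<eta> =
     (\<Sum>x\<in>{0..N+1}. \<Sum>y\<in>{0..N+1} - {x}.
        real (\<eta> x) * rw_rate N Lam c r x y * (f (\<eta>(x := \<eta> x - 1, y := \<eta> y + 1)) - f \<eta>))"

definition calG :: "nat \<Rightarrow> nat set \<Rightarrow> (conf \<Rightarrow> conf \<Rightarrow> real) \<Rightarrow> (nat \<Rightarrow> nat \<Rightarrow> real) \<Rightarrow> conf \<Rightarrow> real \<Rightarrow> real" where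
  "calG N Lam c r \<eta> z = absorb_gf (genLabs N Lam c r) \<eta> z - absorb_gf (genIRW N Lam c r) \<eta> z"

definition phi :: "nat list \<Rightarrow> conf" where
  "phi ys = (\<lambda>u. length (filter (\<lambda>y. y = u) ys))"

end

theory Submission
  imports Defs "HOL-Analysis.Analysis"
begin

lemma funpow_bound:
  fixes Op :: "('a \<Rightarrow> real) \<Rightarrow> 'a \<Rightarrow> real"
  assumes K: "0 \<le> K"
    and H: "\<And>g B. (\<forall>x\<in>S. \<bar>g x\<bar> \<le> B) \<Longrightarrow> \<forall>x\<in>S. \<bar>Op g x\<bar> \<le> K * B"
    and g: "\<forall>x\<in>S. \<bar>g x\<bar> \<le> B"
  shows "\<forall>x\<in>S. \<bar>(Op ^^ k) g x\<bar> \<le> K ^ k * B"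
proof (induction k)
  case 0 then show ?case using g by simp
next
  case (Suc k)
  have "\<forall>x\<in>S. \<bar>Op ((Op ^^ k) g) x\<bar> \<le> K * (K ^ k * B)" by (rule H[OF Suc])
  then show ?case by (simp add: mult.assoc)
qed

lemma exp_series_summable_bound:
  fixes a :: "nat \<Rightarrow> real"
  assumes "\<And>k. \<bar>a k\<bar> \<le> K ^ k * B"
  shows "summable (\<lambda>k. \<bar>t ^ k / fact k * a k\<bar>)"
proof (rule summable_comparison_test[where g = "\<lambda>k. B * ((\<bar>t\<bar> * K) ^ k / fact k)"])
  have "summable (\<lambda>k. (\<bar>t\<bar> * K) ^ k / fact k)"
    using summable_exp[of "\<bar>t\<bar> * K"] by (simp add: divide_inverse mult.commute)
  then show "summable (\<lambda>k. B * ((\<bar>t\<bar> * K) ^ k / fact k))" by (rule summable_mult)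
  show "\<exists>N. \<forall>n\<ge>N. norm \<bar>t ^ n / fact n * a n\<bar> \<le> B * ((\<bar>t\<bar> * K) ^ n / fact n)"
  proof (intro exI allI impI)
    fix n :: nat
    have "norm \<bar>t ^ n / fact n * a n\<bar> = \<bar>t\<bar> ^ n / fact n * \<bar>a n\<bar>"
      by (simp add: abs_mult power_abs)
    also have "\<dots> \<le> \<bar>t\<bar> ^ n / fact n * (K ^ n * B)"
      by (intro mult_left_mono assms) auto
    also have "\<dots> = B * ((\<bar>t\<bar> * K) ^ n / fact n)" by (simp add: power_mult_distrib)
    finally show "norm \<bar>t ^ n / fact n * a n\<bar> \<le> B * ((\<bar>t\<bar> * K) ^ n / fact n)" .
  qed
qed

locale gform =
  fixes S :: "conf set" and Q :: "(conf \<Rightarrow> real) \<Rightarrow> conf \<Rightarrow> real"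
    and P :: "conf \<Rightarrow> 'p set" and w :: "conf \<Rightarrow> 'p \<Rightarrow> real" and T :: "conf \<Rightarrow> 'p \<Rightarrow> conf"
  assumes finS: "finite S"
    and finP: "\<And>\<eta>. \<eta> \<in> S \<Longrightarrow> finite (P \<eta>)"
    and wnn: "\<And>\<eta> p. \<eta> \<in> S \<Longrightarrow> p \<in> P \<eta> \<Longrightarrow> 0 \<le> w \<eta> p"
    and Tin: "\<And>\<eta> p. \<eta> \<in> S \<Longrightarrow> p \<in> P \<eta> \<Longrightarrow> w \<eta> p \<noteq> 0 \<Longrightarrow> T \<eta> p \<in> S"
    and Qeq: "\<And>\<eta> g. \<eta> \<in> S \<Longrightarrow> Q g \<eta> = (\<Sum>p\<in>P \<eta>. w \<eta> p * (g (T \<eta> p) - g \<eta>))"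
begin

lemma loc: "\<eta> \<in> S \<Longrightarrow> \<forall>x\<in>S. g x = h x \<Longrightarrow> Q g \<eta> = Q h \<eta>"
  unfolding Qeq by (intro sum.cong refl) (metis Tin mult_zero_left)

lemma powloc: "\<forall>x\<in>S. g x = h x \<Longrightarrow> \<forall>\<eta>\<in>S. (Q ^^ k) g \<eta> = (Q ^^ k) h \<eta>"
  by (induction k) (auto intro: loc)

lemma lin: "\<eta> \<in> S \<Longrightarrow> finite I \<Longrightarrow>
   Q (\<lambda>x. \<Sum>i\<in>I. c i * h i x) \<eta> = (\<Sum>i\<in>I. c i * Q (h i) \<eta>)"
proof -
  assume e: "\<eta> \<in> S" and I: "finite I"
  have "Q (\<lambda>x. \<Sum>i\<in>I. c i * h i x) \<eta> = (\<Sum>p\<in>P \<eta>. \<Sum>i\<in>I. c i * (w \<eta> p * (h i (T \<eta> p) - h i \<eta>)))"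
    unfolding Qeq[OF e] by (intro sum.cong refl) (simp add: sum_distrib_left sum_subtractf[symmetric] algebra_simps)
  also have "\<dots> = (\<Sum>i\<in>I. c i * Q (h i) \<eta>)"
    unfolding Qeq[OF e] by (subst sum.swap) (simp add: sum_distrib_left)
  finally show ?thesis .
qed

lemma powlin: "finite I \<Longrightarrow> \<forall>\<eta>\<in>S.
   (Q ^^ k) (\<lambda>x. \<Sum>i\<in>I. c i * h i x) \<eta> = (\<Sum>i\<in>I. c i * (Q ^^ k) (h i) \<eta>)"
proof (induction k)
  case 0 then show ?case by simp
next
  case (Suc k)
  show ?case
  proof
    fix \<eta> assume e: "\<eta> \<in> S"
    have "(Q ^^ Suc k) (\<lambda>x. \<Sum>i\<in>I. c i * h i x) \<eta> = Q (\<lambda>x. \<Sum>i\<in>I. c i * (Q ^^ k) (h i) x) \<eta>"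
      using Suc by (simp add: loc[OF e])
    also have "\<dots> = (\<Sum>i\<in>I. c i * (Q ^^ Suc k) (h i) \<eta>)" using lin[OF e Suc.prems] by simp
    finally show "(Q ^^ Suc k) (\<lambda>x. \<Sum>i\<in>I. c i * h i x) \<eta> = (\<Sum>i\<in>I. c i * (Q ^^ Suc k) (h i) \<eta>)" .
  qed
qed

definition W where "W = (\<Sum>\<eta>\<in>S. \<Sum>p\<in>P \<eta>. w \<eta> p)"

lemma W_nn: "0 \<le> W" unfolding W_def by (intro sum_nonneg) (auto intro: wnn)

lemma wsum_le: "\<eta> \<in> S \<Longrightarrow> (\<Sum>p\<in>P \<eta>. w \<eta> p) \<le> W"
  unfolding W_def
  by (rule member_le_sum[of \<eta> S "\<lambda>\<eta>. \<Sum>p\<in>P \<eta>. w \<eta> p", OF _ _ finS]) (auto intro: sum_nonneg wnn)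

lemma Qbound: "\<forall>x\<in>S. \<bar>g x\<bar> \<le> B \<Longrightarrow> \<forall>x\<in>S. \<bar>Q g x\<bar> \<le> (2 * W) * B"
proof
  fix \<eta> assume g: "\<forall>x\<in>S. \<bar>g x\<bar> \<le> B" and e: "\<eta> \<in> S"
  have B0: "0 \<le> B" using g e by force
  have "\<bar>Q g \<eta>\<bar> \<le> (\<Sum>p\<in>P \<eta>. \<bar>w \<eta> p * (g (T \<eta> p) - g \<eta>)\<bar>)"
    unfolding Qeq[OF e] by (rule sum_abs)
  also have "\<dots> \<le> (\<Sum>p\<in>P \<eta>. w \<eta> p * (2 * B))"
  proof (intro sum_mono)
    fix p assume p: "p \<in> P \<eta>"
    show "\<bar>w \<eta> p * (g (T \<eta> p) - g \<eta>)\<bar> \<le> w \<eta> p * (2 * B)"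
    proof (cases "w \<eta> p = 0")
      case True then show ?thesis by simp
    next
      case False
      then have "T \<eta> p \<in> S" using Tin e p by blast
      then have a: "\<bar>g (T \<eta> p)\<bar> \<le> B" using g by blast
      have b: "\<bar>g \<eta>\<bar> \<le> B" using g e by blast
      have "\<bar>g (T \<eta> p) - g \<eta>\<bar> \<le> 2 * B" using a b by linarith
      then show ?thesis using wnn[OF e p] by (simp add: abs_mult mult_left_mono)
    qed
  qed
  also have "\<dots> = (\<Sum>p\<in>P \<eta>. w \<eta> p) * (2 * B)" by (simp add: sum_distrib_right)
  also have "\<dots> \<le> W * (2 * B)" using wsum_le[OF e] B0 by (simp add: mult_right_mono)
  finally show "\<bar>Q g \<eta>\<bar> \<le> (2 * W) * B" by simp
qed

lemma powbound: "\<forall>x\<in>S. \<bar>g x\<bar> \<le> B \<Longrightarrow> \<forall>x\<in>S. \<bar>(Q ^^ k) g x\<bar> \<le> (2 * W) ^ k * B"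
  by (rule funpow_bound[where Op = Q]) (use W_nn Qbound in auto)

definition gB :: "(conf \<Rightarrow> real) \<Rightarrow> real" where "gB g = (\<Sum>x\<in>S. \<bar>g x\<bar>)"

lemma gB: "\<forall>x\<in>S. \<bar>g x\<bar> \<le> gB g"
  unfolding gB_def proof
  fix x assume x: "x \<in> S"
  show "\<bar>g x\<bar> \<le> (\<Sum>x\<in>S. \<bar>g x\<bar>)" by (rule member_le_sum[where f="\<lambda>x. \<bar>g x\<bar>", OF x]) (auto simp: finS)
qed

lemma summ_abs:
  assumes e: "\<eta> \<in> S"
  shows "summable (\<lambda>k. \<bar>t ^ k / fact k * (Q ^^ k) g \<eta>\<bar>)"
proof (rule exp_series_summable_bound[where K="2 * W" and B="gB g"])
  fix k
  have "\<forall>x\<in>S. \<bar>(Q ^^ k) g x\<bar> \<le> (2 * W) ^ k * gB g" by (rule powbound[OF gB])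
  then show "\<bar>(Q ^^ k) g \<eta>\<bar> \<le> (2 * W) ^ k * gB g" using e by blast
qed

lemma summ: "\<eta> \<in> S \<Longrightarrow> summable (\<lambda>k. t ^ k / fact k * (Q ^^ k) g \<eta>)"
  by (rule summable_rabs_cancel) (rule summ_abs)

lemma sg_loc: "\<eta> \<in> S \<Longrightarrow> \<forall>x\<in>S. g x = h x \<Longrightarrow> semigroup Q t g \<eta> = semigroup Q t h \<eta>"
proof -
  assume e: "\<eta> \<in> S" and gh: "\<forall>x\<in>S. g x = h x"
  have "\<And>k. (Q ^^ k) g \<eta> = (Q ^^ k) h \<eta>" using powloc[OF gh] e by blast
  then show ?thesis unfolding semigroup_def by simp
qed

lemma sg_lin: "\<eta> \<in> S \<Longrightarrow> finite I \<Longrightarrow>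
   semigroup Q t (\<lambda>x. \<Sum>i\<in>I. c i * h i x) \<eta> = (\<Sum>i\<in>I. c i * semigroup Q t (h i) \<eta>)"
proof -
  assume e: "\<eta> \<in> S" and I: "finite I"
  have "semigroup Q t (\<lambda>x. \<Sum>i\<in>I. c i * h i x) \<eta> = (\<Sum>k. \<Sum>i\<in>I. c i * (t ^ k / fact k * (Q ^^ k) (h i) \<eta>))"
    unfolding semigroup_def using powlin[OF I] e
    by (simp add: sum_distrib_left algebra_simps)
  also have "\<dots> = (\<Sum>i\<in>I. \<Sum>k. c i * (t ^ k / fact k * (Q ^^ k) (h i) \<eta>))"
    by (rule suminf_sum) (intro summable_mult summ[OF e])
  also have "\<dots> = (\<Sum>i\<in>I. c i * semigroup Q t (h i) \<eta>)"
    unfolding semigroup_def by (intro sum.cong refl suminf_mult summ[OF e])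
  finally show ?thesis .
qed

end

lemma pascal_sum:
  fixes a :: real and r :: "nat \<Rightarrow> real"
  shows "(\<Sum>j\<le>k. real (k choose j) * a ^ (k - j) * (r (Suc j) + a * r j)) =
         (\<Sum>j\<le>Suc k. real (Suc k choose j) * a ^ (Suc k - j) * r j)"
proof -
  have e2: "(\<Sum>j\<le>k. real (k choose j) * a ^ (Suc (k - j)) * r j) =
        a ^ Suc k * r 0 + (\<Sum>j\<le>k. real (k choose Suc j) * a ^ (k - j) * r (Suc j))"
  proof (cases k)
    case 0 then show ?thesis by simp
  next
    case (Suc m)
    have "(\<Sum>j\<le>Suc m. real (Suc m choose j) * a ^ (Suc (Suc m - j)) * r j) =
       a ^ Suc (Suc m) * r 0 + (\<Sum>j\<le>m. real (Suc m choose Suc j) * a ^ (Suc (Suc m - Suc j)) * r (Suc j))"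
      by (subst sum.atMost_Suc_shift) simp
    also have "(\<Sum>j\<le>m. real (Suc m choose Suc j) * a ^ (Suc (Suc m - Suc j)) * r (Suc j)) =
        (\<Sum>j\<le>Suc m. real (Suc m choose Suc j) * a ^ (Suc m - j) * r (Suc j))"
      by (simp add: Suc_diff_le binomial_eq_0)
    finally show ?thesis using Suc by simp
  qed
  have "(\<Sum>j\<le>k. real (k choose j) * a ^ (k - j) * (r (Suc j) + a * r j)) =
     (\<Sum>j\<le>k. real (k choose j) * a ^ (k - j) * r (Suc j)) + (\<Sum>j\<le>k. real (k choose j) * a ^ (Suc (k - j)) * r j)"
    by (simp add: sum.distrib algebra_simps)
  also have "\<dots> = a ^ Suc k * r 0 + (\<Sum>j\<le>k. real (Suc k choose Suc j) * a ^ (k - j) * r (Suc j))"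
    unfolding e2 by (simp add: sum.distrib algebra_simps)
  also have "\<dots> = (\<Sum>j\<le>Suc k. real (Suc k choose j) * a ^ (Suc k - j) * r j)"
    by (subst sum.atMost_Suc_shift) simp
  finally show ?thesis .
qed

lemma antimono_conv:
  fixes h :: "real \<Rightarrow> real"
  assumes mono: "\<And>s t. 0 \<le> s \<Longrightarrow> s \<le> t \<Longrightarrow> h t \<le> h s"
    and nn: "\<And>t. 0 \<le> t \<Longrightarrow> 0 \<le> h t"
  shows "\<exists>L. (h \<longlongrightarrow> L) at_top"
proof
  let ?L = "Inf (h ` {0..})"
  have bdd: "bdd_below (h ` {0..})" using nn by (auto intro!: bdd_belowI[of _ 0])
  show "(h \<longlongrightarrow> ?L) at_top"
  proof (rule order_tendstoI)
    fix y assume "y < ?L"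
    have "\<forall>t\<ge>0. y < h t"
    proof (intro allI impI)
      fix t :: real assume "0 \<le> t"
      then have "?L \<le> h t" using bdd by (intro cInf_lower) auto
      then show "y < h t" using \<open>y < ?L\<close> by linarith
    qed
    then show "eventually (\<lambda>t. y < h t) at_top" unfolding eventually_at_top_linorder by blast
  next
    fix y assume "?L < y"
    then obtain t0 where t0: "t0 \<in> {0..}" "h t0 < y"
      using cInf_lessD[of "h ` {0..}" y] by auto
    have "\<forall>t\<ge>t0. h t < y" using mono t0 by (meson atLeast_iff le_less_trans)
    then show "eventually (\<lambda>t. h t < y) at_top" unfolding eventually_at_top_linorder by blast
  qed
qed

lemma binom_term:
  fixes t :: real
  assumes jk: "j \<le> k"
  shows "t ^ k / fact k * real (k choose j) = t ^ j / fact j * (t ^ (k - j) / fact (k - j))"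
proof -
  have b: "real (k choose j) = fact k / (fact j * fact (k - j))" by (rule binomial_fact[OF jk])
  have tk: "t ^ k = t ^ j * t ^ (k - j)" using jk by (simp add: power_add[symmetric])
  have "fact k \<noteq> (0::real)" by simp
  then show ?thesis unfolding b tk by (simp add: divide_simps)
qed

context gform begin

definition R where "R g = (\<lambda>x. Q g x + W * g x)"

lemma R_nn: "\<forall>x\<in>S. 0 \<le> g x \<Longrightarrow> \<forall>\<eta>\<in>S. 0 \<le> R g \<eta>"
proof
  fix \<eta> assume g: "\<forall>x\<in>S. 0 \<le> g x" and e: "\<eta> \<in> S"
  have "R g \<eta> = (\<Sum>p\<in>P \<eta>. w \<eta> p * g (T \<eta> p)) + (W - (\<Sum>p\<in>P \<eta>. w \<eta> p)) * g \<eta>"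
    unfolding R_def Qeq[OF e] by (simp add: right_diff_distrib sum_subtractf sum_distrib_right left_diff_distrib)
  also have "\<dots> \<ge> 0"
  proof (rule add_nonneg_nonneg)
    show "0 \<le> (\<Sum>p\<in>P \<eta>. w \<eta> p * g (T \<eta> p))"
    proof (rule sum_nonneg)
      fix p assume p: "p \<in> P \<eta>"
      show "0 \<le> w \<eta> p * g (T \<eta> p)"
        using wnn[OF e p] Tin[OF e p] g by (cases "w \<eta> p = 0") auto
    qed
    show "0 \<le> (W - (\<Sum>p\<in>P \<eta>. w \<eta> p)) * g \<eta>"
      using wsum_le[OF e] g e by simp
  qed
  finally show "0 \<le> R g \<eta>" .
qed

lemma Rpow_nn: "\<forall>x\<in>S. 0 \<le> g x \<Longrightarrow> \<forall>\<eta>\<in>S. 0 \<le> (R ^^ j) g \<eta>"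
  by (induction j) (auto intro: R_nn[rule_format])

lemma Rbound: "\<forall>x\<in>S. \<bar>g x\<bar> \<le> B \<Longrightarrow> \<forall>x\<in>S. \<bar>R g x\<bar> \<le> (3 * W) * B"
proof
  fix x assume g: "\<forall>x\<in>S. \<bar>g x\<bar> \<le> B" and x: "x \<in> S"
  have a: "\<bar>Q g x\<bar> \<le> 2 * W * B" using Qbound[OF g] x by blast
  have "\<bar>W * g x\<bar> \<le> W * B" using g x W_nn by (simp add: abs_mult mult_left_mono)
  then show "\<bar>R g x\<bar> \<le> (3 * W) * B" unfolding R_def using a by linarith
qed

lemma Rpowbound: "\<forall>x\<in>S. \<bar>g x\<bar> \<le> B \<Longrightarrow> \<forall>x\<in>S. \<bar>(R ^^ k) g x\<bar> \<le> (3 * W) ^ k * B"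
  by (rule funpow_bound[where Op = R]) (use W_nn Rbound in auto)

lemma Q_binom: "\<forall>\<eta>\<in>S. (Q ^^ k) g \<eta> =
   (\<Sum>j\<le>k. real (k choose j) * (- W) ^ (k - j) * (R ^^ j) g \<eta>)"
proof (induction k)
  case 0 then show ?case by simp
next
  case (Suc k)
  show ?case
  proof
    fix \<eta> assume e: "\<eta> \<in> S"
    have "(Q ^^ Suc k) g \<eta> = Q (\<lambda>x. \<Sum>j\<le>k. (real (k choose j) * (- W) ^ (k - j)) * (R ^^ j) g x) \<eta>"
      using Suc by (simp add: loc[OF e] mult.assoc)
    also have "\<dots> = (\<Sum>j\<le>k. (real (k choose j) * (- W) ^ (k - j)) * Q ((R ^^ j) g) \<eta>)"
      by (rule lin[OF e]) simp
    also have "\<dots> = (\<Sum>j\<le>k. real (k choose j) * (- W) ^ (k - j) * ((R ^^ Suc j) g \<eta> + (- W) * (R ^^ j) g \<eta>))"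
      by (simp add: R_def)
    also have "\<dots> = (\<Sum>j\<le>Suc k. real (Suc k choose j) * (- W) ^ (Suc k - j) * (R ^^ j) g \<eta>)"
      by (rule pascal_sum[where r = "\<lambda>j. (R ^^ j) g \<eta>"])
    finally show "(Q ^^ Suc k) g \<eta> = (\<Sum>j\<le>Suc k. real (Suc k choose j) * (- W) ^ (Suc k - j) * (R ^^ j) g \<eta>)" .
  qed
qed

lemma sg_nn:
  assumes g: "\<forall>x\<in>S. 0 \<le> g x" and e: "\<eta> \<in> S" and t: "0 \<le> t"
  shows "0 \<le> semigroup Q t g \<eta>"
proof -
  define a where "a = (\<lambda>j. t ^ j / fact j * (R ^^ j) g \<eta>)"
  define b where "b = (\<lambda>m. t ^ m / fact m * (- W) ^ m)"
  have sa: "summable (\<lambda>k. norm (a k))" unfolding a_def real_norm_def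
  proof (rule exp_series_summable_bound[where K="3 * W" and B="gB g"])
    fix k
    show "\<bar>(R ^^ k) g \<eta>\<bar> \<le> (3 * W) ^ k * gB g" using Rpowbound[OF gB] e by blast
  qed
  have sb: "summable (\<lambda>k. norm (b k))" unfolding b_def real_norm_def
    by (rule exp_series_summable_bound[where K="\<bar>W\<bar>" and B=1]) (simp add: power_abs)
  have "semigroup Q t g \<eta> = (\<Sum>k. \<Sum>i\<le>k. a i * b (k - i))"
    unfolding semigroup_def
  proof (intro suminf_cong)
    fix k
    have "t ^ k / fact k * (Q ^^ k) g \<eta> =
       (\<Sum>j\<le>k. t ^ k / fact k * real (k choose j) * (- W) ^ (k - j) * (R ^^ j) g \<eta>)"
      using Q_binom e by (simp add: sum_distrib_left mult.assoc)
    also have "\<dots> = (\<Sum>i\<le>k. a i * b (k - i))"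
    proof (intro sum.cong refl)
      fix j assume "j \<in> {..k}"
      then have jk: "j \<le> k" by simp
      show "t ^ k / fact k * real (k choose j) * (- W) ^ (k - j) * (R ^^ j) g \<eta> = a j * b (k - j)"
        unfolding a_def b_def
        using binom_term[OF jk, of t] by (simp add: mult_ac)
    qed
    finally show "t ^ k / fact k * (Q ^^ k) g \<eta> = (\<Sum>i\<le>k. a i * b (k - i))" .
  qed
  also have "\<dots> = (\<Sum>k. a k) * (\<Sum>k. b k)" by (rule Cauchy_product[OF sa sb, symmetric])
  also have "(\<Sum>k. b k) = exp ((- W) * t)"
    unfolding b_def exp_def power_mult_distrib by (simp add: divide_inverse mult_ac scaleR_conv_of_real)
  finally have eq: "semigroup Q t g \<eta> = (\<Sum>k. a k) * exp (- W * t)" .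
  have "0 \<le> (\<Sum>k. a k)"
  proof (rule suminf_nonneg)
    show "summable a" using sa by (rule summable_norm_cancel)
    fix n
    have "0 \<le> (R ^^ n) g \<eta>" using Rpow_nn[OF g] e by blast
    then show "0 \<le> a n" unfolding a_def using t by simp
  qed
  then show ?thesis unfolding eq by simp
qed

lemma sg_neg: "\<eta> \<in> S \<Longrightarrow> semigroup Q t (\<lambda>x. - f x) \<eta> = - semigroup Q t f \<eta>"
  using sg_lin[of \<eta> "{0::nat}", where c="\<lambda>_. -1" and h="\<lambda>_. f" and t=t] by simp

lemma sg_deriv:
  assumes e: "\<eta> \<in> S"
  shows "((\<lambda>t. semigroup Q t g \<eta>) has_real_derivative semigroup Q t (Q g) \<eta>) (at t)"
proof -
  define c where "c = (\<lambda>n. (Q ^^ n) g \<eta> / fact n)"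
  have f: "(\<lambda>t. semigroup Q t g \<eta>) = (\<lambda>x. \<Sum>n. c n * x ^ n)"
    unfolding semigroup_def c_def by (simp add: field_simps)
  have "(\<Sum>n. diffs c n * t ^ n) = semigroup Q t (Q g) \<eta>"
    unfolding semigroup_def c_def
  proof (intro suminf_cong)
    fix n
    have "real (Suc n) * ((Q ^^ Suc n) g \<eta> / fact (Suc n)) = (Q ^^ Suc n) g \<eta> / fact n"
      by (simp only: fact_Suc) (simp del: of_nat_Suc)
    then show "diffs (\<lambda>n. (Q ^^ n) g \<eta> / fact n) n * t ^ n = t ^ n / fact n * (Q ^^ n) (Q g) \<eta>"
      unfolding diffs_def by (simp add: funpow_Suc_right del: funpow.simps)
  qed
  moreover have "((\<lambda>x. \<Sum>n. c n * x ^ n) has_real_derivative (\<Sum>n. diffs c n * t ^ n)) (at t)"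
  proof (rule termdiffs_strong_converges_everywhere)
    fix y
    show "summable (\<lambda>n. c n * y ^ n)" using summ[OF e, of y g] unfolding c_def by (simp add: field_simps)
  qed
  ultimately show ?thesis unfolding f by simp
qed

lemma sg_conv:
  assumes e: "\<eta> \<in> S" and g: "\<forall>x\<in>S. 0 \<le> g x" and Qg: "\<forall>x\<in>S. Q g x \<le> 0"
  shows "\<exists>L. ((\<lambda>t. semigroup Q t g \<eta>) \<longlongrightarrow> L) at_top"
proof (rule antimono_conv)
  fix s t :: real assume s: "0 \<le> s" "s \<le> t"
  show "semigroup Q t g \<eta> \<le> semigroup Q s g \<eta>"
  proof (rule DERIV_nonpos_imp_nonincreasing[OF s(2)])
    fix x assume x: "s \<le> x" "x \<le> t"
    have "0 \<le> semigroup Q x (\<lambda>y. - Q g y) \<eta>" using Qg x s by (intro sg_nn e) auto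
    then have "semigroup Q x (Q g) \<eta> \<le> 0" using sg_neg[OF e] by simp
    then show "\<exists>y. ((\<lambda>t. semigroup Q t g \<eta>) has_real_derivative y) (at x) \<and> y \<le> 0"
      using sg_deriv[OF e] by blast
  qed
next
  fix t :: real assume "0 \<le> t" then show "0 \<le> semigroup Q t g \<eta>" by (rule sg_nn[OF g e])
qed

end

definition supp :: "nat \<Rightarrow> conf \<Rightarrow> bool" where
  "supp N \<eta> \<longleftrightarrow> (\<forall>y. y \<notin> {0..N+1} \<longrightarrow> \<eta> y = 0)"

definition tot :: "nat \<Rightarrow> conf \<Rightarrow> nat" where
  "tot N \<eta> = (\<Sum>x\<in>{0..N+1}. \<eta> x)"

lemma sum_upd_nat:
  fixes f :: "'a \<Rightarrow> nat"
  assumes "finite A" "x \<in> A"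
  shows "sum (f(x := v)) A + f x = sum f A + v"
proof -
  have "sum (f(x := v)) A = (f(x := v)) x + sum (f(x := v)) (A - {x})" by (rule sum.remove[OF assms])
  also have "\<dots> = v + sum (f(x := v)) (A - {x})" by simp
  also have "sum (f(x := v)) (A - {x}) = sum f (A - {x})" by (intro sum.cong) auto
  finally show ?thesis using sum.remove[OF assms, of f] by simp
qed

lemma tot_dec: "x \<in> {0..N+1} \<Longrightarrow> 0 < \<eta> x \<Longrightarrow> tot N (\<eta>(x := \<eta> x - 1)) = tot N \<eta> - 1"
  unfolding tot_def using sum_upd_nat[of "{0..N+1}" x \<eta> "\<eta> x - 1"] by simp

lemma tot_move: "x \<in> {0..N+1} \<Longrightarrow> y \<in> {0..N+1} \<Longrightarrow> x \<noteq> y \<Longrightarrow> 0 < \<eta> x \<Longrightarrow>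
   tot N (\<eta>(x := \<eta> x - 1, y := \<eta> y + 1)) = tot N \<eta>"
proof -
  assume a: "x \<in> {0..N+1}" "y \<in> {0..N+1}" "x \<noteq> y" "0 < \<eta> x"
  let ?\<eta>' = "\<eta>(x := \<eta> x - 1)"
  have "tot N (?\<eta>'(y := ?\<eta>' y + 1)) + ?\<eta>' y = tot N ?\<eta>' + (?\<eta>' y + 1)"
    unfolding tot_def by (rule sum_upd_nat) (use a in auto)
  then have "tot N (?\<eta>'(y := ?\<eta>' y + 1)) = tot N ?\<eta>' + 1" by simp
  moreover have "tot N ?\<eta>' = tot N \<eta> - 1" by (rule tot_dec) (use a in auto)
  moreover have "tot N \<eta> \<ge> 1"
    using a member_le_sum[of x "{0..N+1}" \<eta>] unfolding tot_def by force
  ultimately show ?thesis using a by simp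
qed

lemma le_tot: "x \<in> {0..N+1} \<Longrightarrow> \<eta> x \<le> tot N \<eta>"
  unfolding tot_def by (rule member_le_sum) auto

lemma tot_split: fixes N :: nat shows "(\<Sum>x\<in>{0..N+1}. f x) = f 0 + (\<Sum>x\<in>{1..N}. f x) + (f (N+1) :: 'a::comm_monoid_add)"
proof -
  have "(\<Sum>x\<in>{0..Suc N}. f x) = (\<Sum>x\<in>{0..N}. f x) + f (Suc N)" by (rule sum.atLeast0_atMost_Suc)
  moreover have "(\<Sum>x\<in>{0..N}. f x) = f 0 + (\<Sum>x\<in>{Suc 0..N}. f x)" by (rule sum.atLeast_Suc_atMost) simp
  ultimately show ?thesis by simp
qed

lemma fin_confs: "finite {\<eta>::conf. supp N \<eta> \<and> tot N \<eta> = n}"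
proof (rule finite_subset)
  show "{\<eta>::conf. supp N \<eta> \<and> tot N \<eta> = n} \<subseteq>
     {f. \<forall>x. (x \<in> {0..N+1} \<longrightarrow> f x \<in> {0..n}) \<and> (x \<notin> {0..N+1} \<longrightarrow> f x = 0)}"
    using le_tot unfolding supp_def by fastforce
  show "finite {f::conf. \<forall>x. (x \<in> {0..N+1} \<longrightarrow> f x \<in> {0..n}) \<and> (x \<notin> {0..N+1} \<longrightarrow> f x = 0)}"
    by (rule finite_set_of_finite_funs) auto
qed

lemma fin_OmegaV: "finite (OmegaV N Lam m)"
proof (rule finite_subset)
  show "OmegaV N Lam m \<subseteq> {f. \<forall>x. (x \<in> {1..N} \<longrightarrow> f x \<in> {0..m}) \<and> (x \<notin> {1..N} \<longrightarrow> f x = 0)}"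
  proof (safe)
    fix f x assume f: "f \<in> OmegaV N Lam m" and x: "x \<in> {1..N}"
    have "f x \<le> (\<Sum>i\<in>{1..N}. f i)" by (rule member_le_sum) (use x in auto)
    then show "f x \<in> {0..m}" using f unfolding OmegaV_def by auto
  qed (auto simp: OmegaV_def)
  show "finite {f::conf. \<forall>x. (x \<in> {1..N} \<longrightarrow> f x \<in> {0..m}) \<and> (x \<notin> {1..N} \<longrightarrow> f x = 0)}"
    by (rule finite_set_of_finite_funs) auto
qed

lemma valid_supp: "valid N Lam \<eta> \<Longrightarrow> supp N \<eta>"
  unfolding valid_def supp_def by auto

locale setting =
  fixes N :: nat and Lam :: "nat set" and c :: "conf \<Rightarrow> conf \<Rightarrow> real" and r :: "nat \<Rightarrow> nat \<Rightarrow> real"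
  assumes L0: "0 \<in> Lam" and Ldown: "\<forall>k\<in>Lam. \<forall>j\<le>k. j \<in> Lam"
    and cnn: "\<forall>m. \<forall>\<xi>\<in>OmegaV N Lam m. \<forall>\<xi>'\<in>OmegaV N Lam m. 0 \<le> c \<xi> \<xi>'"
    and rnn: "\<forall>i\<in>{1..N}. \<forall>j\<in>{0, N+1}. 0 \<le> r i j"
    and cons: "consistent N Lam c r"
begin

abbreviation "QL \<equiv> genLabs N Lam c r"
abbreviation "QI \<equiv> genIRW N Lam c r"

definition "SL n = {\<eta>. valid N Lam \<eta> \<and> tot N \<eta> = n}"
definition "SI n = {\<eta>. supp N \<eta> \<and> tot N \<eta> = n}"

definition "PL \<eta> = OmegaV N Lam (\<Sum>i\<in>{1..N}. \<eta> i) <+> ({1..N} \<times> {0, N+1})"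
definition "wL \<eta> p = (case p of Inl \<xi> \<Rightarrow> c (restrV N \<eta>) \<xi> | Inr (i, j) \<Rightarrow> r i j * real (\<eta> i))"
definition "TL \<eta> p = (case p of Inl \<xi> \<Rightarrow> (\<lambda>y. \<xi> y + absPart N \<eta> y)
                                 | Inr (i, j) \<Rightarrow> \<eta>(i := \<eta> i - 1, j := \<eta> j + 1))"

definition "PI (\<eta>::conf) = Sigma {0..N+1} (\<lambda>x. {0..N+1} - {x})"
definition "wI \<eta> p = (case p of (x, y) \<Rightarrow> real (\<eta> x) * rw_rate N Lam c r x y)"
definition "TI \<eta> p = (case p of (x, y) \<Rightarrow> \<eta>(x := \<eta> x - 1, y := \<eta> y + 1))"

lemma restrV_in: "valid N Lam \<eta> \<Longrightarrow> restrV N \<eta> \<in> OmegaV N Lam (\<Sum>i\<in>{1..N}. \<eta> i)"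
proof -
  assume v: "valid N Lam \<eta>"
  have a: "\<forall>y. y \<notin> {1..N} \<longrightarrow> restrV N \<eta> y = 0" unfolding restrV_def by simp
  have b: "\<forall>i\<in>{1..N}. restrV N \<eta> i \<in> Lam" using v unfolding restrV_def valid_def by simp
  have c: "(\<Sum>i\<in>{1..N}. restrV N \<eta> i) = (\<Sum>i\<in>{1..N}. \<eta> i)"
    by (rule sum.cong) (simp_all add: restrV_def)
  show ?thesis unfolding OmegaV_def using a b c by blast
qed

lemma fin_SL: "finite (SL n)"
  by (rule finite_subset[OF _ fin_confs[of N n]]) (auto simp: SL_def valid_supp)

lemma fin_SI: "finite (SI n)"
  using fin_confs[of N n] by (simp add: SI_def)

lemma TL_Inl:
  assumes e: "\<eta> \<in> SL n" and xi: "\<xi> \<in> OmegaV N Lam (\<Sum>i\<in>{1..N}. \<eta> i)"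
  shows "(\<lambda>y. \<xi> y + absPart N \<eta> y) \<in> SL n"
proof -
  have v: "valid N Lam \<eta>" and tn: "tot N \<eta> = n" using e by (auto simp: SL_def)
  have xi0: "\<And>y. y \<notin> {1..N} \<Longrightarrow> \<xi> y = 0" using xi by (auto simp: OmegaV_def)
  have valid: "valid N Lam (\<lambda>y. \<xi> y + absPart N \<eta> y)" unfolding valid_def
  proof (intro conjI allI impI ballI)
    fix y :: nat assume y: "y \<notin> {0..N+1}"
    then have "y \<notin> {1..N}" by auto
    moreover have "\<eta> y = 0" using v y unfolding valid_def by blast
    ultimately show "\<xi> y + absPart N \<eta> y = 0" using xi0 unfolding absPart_def by simp
  next
    fix i assume i: "i \<in> {1..N}"
    have "\<xi> i \<in> Lam" using xi i unfolding OmegaV_def by blast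
    then show "\<xi> i + absPart N \<eta> i \<in> Lam" using i unfolding absPart_def by simp
  qed
  have m: "(\<Sum>i\<in>{1..N}. \<xi> i) = (\<Sum>i\<in>{1..N}. \<eta> i)" using xi unfolding OmegaV_def by blast
  have s1: "(\<Sum>i\<in>{1..N}. \<xi> i + absPart N \<eta> i) = (\<Sum>i\<in>{1..N}. \<xi> i)"
    by (rule sum.cong) (auto simp: absPart_def)
  have a0: "absPart N \<eta> 0 = \<eta> 0" "absPart N \<eta> (N+1) = \<eta> (N+1)" by (auto simp: absPart_def)
  have x0: "\<xi> 0 = 0" "\<xi> (N+1) = 0" using xi0 by auto
  have "tot N (\<lambda>y. \<xi> y + absPart N \<eta> y) = tot N \<eta>"
    unfolding tot_def tot_split s1 a0 x0 m by simp
  then show ?thesis using valid tn by (simp add: SL_def)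
qed

lemma TL_Inr:
  assumes e: "\<eta> \<in> SL n" and i: "i \<in> {1..N}" and j: "j \<in> {0, N+1}" and pos: "0 < \<eta> i"
  shows "\<eta>(i := \<eta> i - 1, j := \<eta> j + 1) \<in> SL n"
proof -
  have v: "valid N Lam \<eta>" and tn: "tot N \<eta> = n" using e by (auto simp: SL_def)
  have ij: "i \<noteq> j" using i j by auto
  have "\<eta> i \<in> Lam" using v i unfolding valid_def by blast
  then have L: "\<eta> i - 1 \<in> Lam" by (meson Ldown diff_le_self)
  have "valid N Lam (\<eta>(i := \<eta> i - 1, j := \<eta> j + 1))" unfolding valid_def
  proof (intro conjI allI impI ballI)
    fix y :: nat assume y: "y \<notin> {0..N+1}"
    then have "y \<noteq> i" "y \<noteq> j" using i j by auto
    then show "(\<eta>(i := \<eta> i - 1, j := \<eta> j + 1)) y = 0" using v y unfolding valid_def by simp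
  next
    fix k assume k: "k \<in> {1..N}"
    then have "k \<noteq> j" using j by auto
    then show "(\<eta>(i := \<eta> i - 1, j := \<eta> j + 1)) k \<in> Lam"
      using L v k unfolding valid_def by (cases "k = i") simp_all
  qed
  moreover have "tot N (\<eta>(i := \<eta> i - 1, j := \<eta> j + 1)) = tot N \<eta>"
    by (rule tot_move) (use i j ij pos in auto)
  ultimately show ?thesis using tn by (simp add: SL_def)
qed

lemma gformL: "gform (SL n) QL PL wL TL"
proof
  show "finite (SL n)" by (rule fin_SL)
next
  fix \<eta> assume "\<eta> \<in> SL n"
  show "finite (PL \<eta>)" unfolding PL_def using fin_OmegaV by simp
next
  fix \<eta> p assume e: "\<eta> \<in> SL n" and p: "p \<in> PL \<eta>"
  show "0 \<le> wL \<eta> p"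
  proof (cases p)
    case (Inl \<xi>)
    then have "\<xi> \<in> OmegaV N Lam (\<Sum>i\<in>{1..N}. \<eta> i)" using p by (auto simp: PL_def)
    moreover have "restrV N \<eta> \<in> OmegaV N Lam (\<Sum>i\<in>{1..N}. \<eta> i)" using e by (intro restrV_in) (simp add: SL_def)
    ultimately show ?thesis using cnn Inl by (simp add: wL_def)
  next
    case (Inr ij)
    then show ?thesis using p rnn by (auto simp: wL_def PL_def)
  qed
next
  fix \<eta> p assume e: "\<eta> \<in> SL n" and p: "p \<in> PL \<eta>" and w: "wL \<eta> p \<noteq> 0"
  show "TL \<eta> p \<in> SL n"
  proof (cases p)
    case (Inl \<xi>)
    then show ?thesis using p TL_Inl[OF e] by (auto simp: PL_def TL_def)
  next
    case (Inr ij)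
    then obtain i j where ij: "p = Inr (i, j)" "i \<in> {1..N}" "j \<in> {0, N+1}" using p by (auto simp: PL_def)
    then have "0 < \<eta> i" using w by (auto simp: wL_def)
    then show ?thesis using TL_Inr[OF e ij(2,3)] ij by (simp add: TL_def)
  qed
next
  fix \<eta> g assume e: "\<eta> \<in> SL n"
  show "QL g \<eta> = (\<Sum>p\<in>PL \<eta>. wL \<eta> p * (g (TL \<eta> p) - g \<eta>))"
  proof -
    have H: "genH N r g \<eta> = (\<Sum>p\<in>{1..N}\<times>{0,N+1}. wL \<eta> (Inr p) * (g (TL \<eta> (Inr p)) - g \<eta>))"
      unfolding genH_def sum.cartesian_product by (intro sum.cong refl) (simp add: wL_def TL_def split: prod.splits)
    have L: "genL N Lam c g \<eta> = (\<Sum>\<xi>\<in>OmegaV N Lam (\<Sum>i\<in>{1..N}. \<eta> i). wL \<eta> (Inl \<xi>) * (g (TL \<eta> (Inl \<xi>)) - g \<eta>))"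
      unfolding genL_def wL_def TL_def by simp
    have fp: "finite ({1..N} \<times> {0, N+1})" by simp
    show ?thesis unfolding PL_def sum.Plus[OF fin_OmegaV fp] genLabs_def L H by (simp add: comp_def)
  qed
qed

end

context setting begin

lemma one_in_Lam:
  assumes xi: "\<xi> \<in> OmegaV N Lam m" and m: "m \<noteq> 0"
  shows "1 \<in> Lam"
proof -
  have "(\<Sum>i\<in>{1..N}. \<xi> i) \<noteq> 0" using xi m unfolding OmegaV_def by auto
  then obtain i where i: "i \<in> {1..N}" "\<xi> i \<noteq> 0" by (metis sum.neutral)
  have "\<xi> i \<in> Lam" using xi i unfolding OmegaV_def by blast
  then show ?thesis using i(2) Ldown by (meson less_one not_le)
qed

lemma restrV_delta_in:
  assumes xi: "\<xi> \<in> OmegaV N Lam m" and m: "m = (\<Sum>i\<in>{1..N}. delta x i)"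
  shows "restrV N (delta x) \<in> OmegaV N Lam m"
proof -
  have a: "\<forall>y. y \<notin> {1..N} \<longrightarrow> restrV N (delta x) y = 0" unfolding restrV_def by simp
  have b: "\<forall>i\<in>{1..N}. restrV N (delta x) i \<in> Lam"
  proof
    fix i assume i: "i \<in> {1..N}"
    show "restrV N (delta x) i \<in> Lam"
    proof (cases "i = x")
      case True
      then have "delta x i \<le> m" unfolding m by (intro member_le_sum) (use i in auto)
      then have "m \<noteq> 0" using True by (simp add: delta_def)
      then show ?thesis using one_in_Lam[OF xi] i True by (simp add: restrV_def delta_def)
    next
      case False then show ?thesis using i L0 by (simp add: restrV_def delta_def)
    qed
  qed
  have c: "(\<Sum>i\<in>{1..N}. restrV N (delta x) i) = m"
    unfolding m by (rule sum.cong) (simp_all add: restrV_def)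
  show ?thesis unfolding OmegaV_def using a b c by blast
qed

lemma rw_rate_nn:
  assumes xy: "x \<noteq> y"
  shows "0 \<le> rw_rate N Lam c r x y"
proof -
  define g where "g = (\<lambda>\<zeta>::conf. if \<zeta> = delta y then 1 else (0::real))"
  have gx: "g (delta x) = 0"
  proof -
    have "delta x \<noteq> delta y" using xy unfolding delta_def by (metis (full_types) one_neq_zero)
    then show ?thesis unfolding g_def by simp
  qed
  have g0: "\<And>\<zeta>. 0 \<le> g \<zeta>" unfolding g_def by simp
  have L: "0 \<le> genL N Lam c g (delta x)" unfolding genL_def
  proof (rule sum_nonneg)
    fix \<xi>' assume xi: "\<xi>' \<in> OmegaV N Lam (\<Sum>i\<in>{1..N}. delta x i)"
    have "restrV N (delta x) \<in> OmegaV N Lam (\<Sum>i\<in>{1..N}. delta x i)" by (rule restrV_delta_in[OF xi refl])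
    then have "0 \<le> c (restrV N (delta x)) \<xi>'" using cnn xi by blast
    then show "0 \<le> c (restrV N (delta x)) \<xi>' * (g (\<lambda>y. \<xi>' y + absPart N (delta x) y) - g (delta x))"
      using gx g0 by simp
  qed
  have H: "0 \<le> genH N r g (delta x)" unfolding genH_def
  proof (intro sum_nonneg)
    fix i j assume i: "i \<in> {1..N}" and j: "j \<in> {0, N+1}"
    have "0 \<le> r i j" using rnn i j by blast
    then show "0 \<le> r i j * real (delta x i) * (g ((delta x)(i := delta x i - 1, j := delta x j + 1)) - g (delta x))"
      using gx g0 by simp
  qed
  show ?thesis unfolding rw_rate_def genLabs_def using L H g_def by simp
qed

lemma gformI: "gform (SI n) QI PI wI TI"
proof
  show "finite (SI n)" by (rule fin_SI)
next
  fix \<eta> assume "\<eta> \<in> SI n"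
  show "finite (PI \<eta>)" unfolding PI_def by simp
next
  fix \<eta> p assume e: "\<eta> \<in> SI n" and p: "p \<in> PI \<eta>"
  then obtain x y where "p = (x, y)" "x \<noteq> y" by (auto simp: PI_def)
  then show "0 \<le> wI \<eta> p" using rw_rate_nn by (simp add: wI_def)
next
  fix \<eta> p assume e: "\<eta> \<in> SI n" and p: "p \<in> PI \<eta>" and w: "wI \<eta> p \<noteq> 0"
  obtain x y where pxy: "p = (x, y)" by (cases p)
  have xy: "p = (x, y)" "x \<in> {0..N+1}" "y \<in> {0..N+1}" "x \<noteq> y" using p pxy by (simp_all add: PI_def)
  then have pos: "0 < \<eta> x" using w by (auto simp: wI_def)
  have s: "supp N \<eta>" and tn: "tot N \<eta> = n" using e by (auto simp: SI_def)
  have "supp N (\<eta>(x := \<eta> x - 1, y := \<eta> y + 1))"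
    unfolding supp_def
  proof (intro allI impI)
    fix z :: nat assume z: "z \<notin> {0..N+1}"
    then have "z \<noteq> x" "z \<noteq> y" using xy by auto
    then show "(\<eta>(x := \<eta> x - 1, y := \<eta> y + 1)) z = 0" using s z unfolding supp_def by simp
  qed
  moreover have "tot N (\<eta>(x := \<eta> x - 1, y := \<eta> y + 1)) = tot N \<eta>"
    by (rule tot_move) (use xy pos in auto)
  ultimately show "TI \<eta> p \<in> SI n" using tn xy by (simp add: SI_def TI_def)
next
  fix \<eta> g assume e: "\<eta> \<in> SI n"
  show "QI g \<eta> = (\<Sum>p\<in>PI \<eta>. wI \<eta> p * (g (TI \<eta> p) - g \<eta>))"
  proof -
    have cp: "(\<lambda>p. wI \<eta> p * (g (TI \<eta> p) - g \<eta>)) = (\<lambda>(x, y). real (\<eta> x) * rw_rate N Lam c r x y * (g (\<eta>(x := \<eta> x - 1, y := \<eta> y + 1)) - g \<eta>))"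
      by (auto simp: wI_def TI_def)
    have "(\<Sum>p\<in>PI \<eta>. wI \<eta> p * (g (TI \<eta> p) - g \<eta>)) =
      (\<Sum>x\<in>{0..N+1}. \<Sum>y\<in>{0..N+1} - {x}. real (\<eta> x) * rw_rate N Lam c r x y * (g (\<eta>(x := \<eta> x - 1, y := \<eta> y + 1)) - g \<eta>))"
      unfolding PI_def cp by (rule sum.Sigma[symmetric]) auto
    then show ?thesis unfolding genIRW_def by simp
  qed
qed

end

context gform begin
lemma Q_nonpos:
  assumes "\<And>\<eta> p. \<eta> \<in> S \<Longrightarrow> p \<in> P \<eta> \<Longrightarrow> w \<eta> p \<noteq> 0 \<Longrightarrow> g (T \<eta> p) \<le> g \<eta>"
  shows "\<forall>\<eta>\<in>S. Q g \<eta> \<le> 0"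
proof
  fix \<eta> assume e: "\<eta> \<in> S"
  have "(\<Sum>p\<in>P \<eta>. w \<eta> p * (g (T \<eta> p) - g \<eta>)) \<le> 0"
  proof (rule sum_nonpos)
    fix p assume p: "p \<in> P \<eta>"
    show "w \<eta> p * (g (T \<eta> p) - g \<eta>) \<le> 0"
    proof (cases "w \<eta> p = 0")
      case False
      then have "g (T \<eta> p) - g \<eta> \<le> 0" using assms[OF e p] by simp
      then show ?thesis using wnn[OF e p] by (simp add: mult_nonneg_nonpos)
    qed simp
  qed
  then show "Q g \<eta> \<le> 0" using Qeq[OF e] by simp
qed
end

definition f0 :: "conf \<Rightarrow> real" where "f0 = (\<lambda>\<zeta>. 0 ^ (\<zeta> 0))"

lemma f0_nn: "0 \<le> f0 \<zeta>" unfolding f0_def by simp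

lemma f0_mono: "\<eta> 0 \<le> \<zeta> 0 \<Longrightarrow> f0 \<zeta> \<le> f0 \<eta>"
  unfolding f0_def by (cases "\<eta> 0 = 0") (auto simp: power_0_left)

context setting begin

lemma rw_rate_0: "rw_rate N Lam c r 0 y = 0"
proof -
  define g where "g = (\<lambda>\<zeta>::conf. if \<zeta> = delta y then 1 else (0::real))"
  have m: "(\<Sum>i\<in>{1..N}. delta 0 i) = 0" by (simp add: delta_def)
  have xi: "(\<lambda>y. \<xi> y + absPart N (delta 0) y) = delta 0" if xi: "\<xi> \<in> OmegaV N Lam 0" for \<xi>
  proof
    fix z
    have "\<xi> z = 0"
    proof (cases "z \<in> {1..N}")
      case True
      have "(\<Sum>i\<in>{1..N}. \<xi> i) = 0" using xi unfolding OmegaV_def by blast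
      then show ?thesis using True by simp
    next
      case False then show ?thesis using xi unfolding OmegaV_def by blast
    qed
    then show "\<xi> z + absPart N (delta 0) z = delta 0 z" by (simp add: absPart_def delta_def)
  qed
  have L: "genL N Lam c g (delta 0) = 0" unfolding genL_def m
    by (rule sum.neutral) (simp add: xi)
  have H: "genH N r g (delta 0) = 0" unfolding genH_def
    by (rule sum.neutral) (auto simp: delta_def)
  show ?thesis unfolding rw_rate_def genLabs_def using L H g_def by simp
qed

lemma QL_f0: "\<forall>\<eta>\<in>SL n. QL f0 \<eta> \<le> 0"
proof (rule gform.Q_nonpos[OF gformL])
  fix \<eta> p assume e: "\<eta> \<in> SL n" and p: "p \<in> PL \<eta>"
  show "f0 (TL \<eta> p) \<le> f0 \<eta>"
  proof (cases p)
    case (Inl \<xi>)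
    then show ?thesis by (intro f0_mono) (simp add: TL_def absPart_def)
  next
    case (Inr ij)
    then obtain i j where "p = Inr (i, j)" "i \<in> {1..N}" using p by (auto simp: PL_def)
    then show ?thesis by (intro f0_mono) (auto simp: TL_def)
  qed
qed

lemma QI_f0: "\<forall>\<eta>\<in>SI n. QI f0 \<eta> \<le> 0"
proof (rule gform.Q_nonpos[OF gformI])
  fix \<eta> p assume e: "\<eta> \<in> SI n" and p: "p \<in> PI \<eta>" and w: "wI \<eta> p \<noteq> 0"
  obtain x y where pxy: "p = (x, y)" by (cases p)
  have "x \<noteq> 0"
  proof
    assume "x = 0" then show False using w pxy rw_rate_0 by (simp add: wI_def)
  qed
  then show "f0 (TI \<eta> p) \<le> f0 \<eta>" using pxy by (intro f0_mono) (auto simp: TI_def)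
qed

lemma convL: "\<eta> \<in> SL n \<Longrightarrow> \<exists>L. ((\<lambda>t. semigroup QL t f0 \<eta>) \<longlongrightarrow> L) at_top"
  by (rule gform.sg_conv[OF gformL]) (use f0_nn QL_f0 in auto)

lemma convI: "\<eta> \<in> SI n \<Longrightarrow> \<exists>L. ((\<lambda>t. semigroup QI t f0 \<eta>) \<longlongrightarrow> L) at_top"
  by (rule gform.sg_conv[OF gformI]) (use f0_nn QI_f0 in auto)

end

locale gfam =
  fixes N :: nat and S :: "nat \<Rightarrow> conf set" and Q :: "(conf \<Rightarrow> real) \<Rightarrow> conf \<Rightarrow> real"
    and P :: "conf \<Rightarrow> 'p set" and w :: "conf \<Rightarrow> 'p \<Rightarrow> real" and T :: "conf \<Rightarrow> 'p \<Rightarrow> conf"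
  assumes gf: "\<And>n. gform (S n) Q P w T"
    and down: "\<And>n \<eta> x. \<eta> \<in> S n \<Longrightarrow> x \<in> {0..N+1} \<Longrightarrow> 0 < \<eta> x \<Longrightarrow> \<eta>(x := \<eta> x - 1) \<in> S (n - 1)"
    and comm: "\<And>n \<eta> f. \<eta> \<in> S n \<Longrightarrow> Q (annihA N f) \<eta> = annihA N (Q f) \<eta>"
begin

lemma A_loc:
  assumes e: "\<eta> \<in> S n" and hh: "\<forall>\<zeta>\<in>S (n - 1). h \<zeta> = h' \<zeta>"
  shows "annihA N h \<eta> = annihA N h' \<eta>"
  unfolding annihA_def
proof (rule sum.cong[OF refl])
  fix x assume x: "x \<in> {0..N+1}"
  show "real (\<eta> x) * h (\<eta>(x := \<eta> x - 1)) = real (\<eta> x) * h' (\<eta>(x := \<eta> x - 1))"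
  proof (cases "\<eta> x = 0")
    case False
    then have "\<eta>(x := \<eta> x - 1) \<in> S (n - 1)" using down[OF e x] by simp
    then show ?thesis using hh by simp
  qed simp
qed

lemma C1: "\<eta> \<in> S n \<Longrightarrow> (Q ^^ k) (annihA N f) \<eta> = annihA N ((Q ^^ k) f) \<eta>"
proof (induction k arbitrary: n \<eta>)
  case 0 then show ?case by simp
next
  case (Suc k)
  have "(Q ^^ Suc k) (annihA N f) \<eta> = Q ((Q ^^ k) (annihA N f)) \<eta>" by simp
  also have "\<dots> = Q (annihA N ((Q ^^ k) f)) \<eta>"
    by (rule gform.loc[OF gf Suc.prems]) (use Suc.IH in blast)
  also have "\<dots> = annihA N (Q ((Q ^^ k) f)) \<eta>" by (rule comm[OF Suc.prems])
  finally show ?case by simp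
qed

lemma C2:
  assumes e: "\<eta> \<in> S n"
  shows "annihA N (semigroup Q t f) \<eta> = semigroup Q t (annihA N f) \<eta>"
proof -
  define u where "u = (\<lambda>x k. real (\<eta> x) * (t ^ k / fact k * (Q ^^ k) f (\<eta>(x := \<eta> x - 1))))"
  have su: "summable (u x)" if x: "x \<in> {0..N+1}" for x
  proof (cases "\<eta> x = 0")
    case True then show ?thesis by (simp add: u_def)
  next
    case False
    then have "\<eta>(x := \<eta> x - 1) \<in> S (n - 1)" using down[OF e x] by simp
    then show ?thesis unfolding u_def by (intro summable_mult gform.summ[OF gf])
  qed
  have "annihA N (semigroup Q t f) \<eta> = (\<Sum>x\<in>{0..N+1}. \<Sum>k. u x k)"
    unfolding annihA_def semigroup_def
  proof (rule sum.cong[OF refl])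
    fix x assume x: "x \<in> {0..N+1}"
    show "real (\<eta> x) * (\<Sum>k. t ^ k / fact k * (Q ^^ k) f (\<eta>(x := \<eta> x - 1))) = (\<Sum>k. u x k)"
    proof (cases "\<eta> x = 0")
      case True then show ?thesis by (simp add: u_def)
    next
      case False
      then have "\<eta>(x := \<eta> x - 1) \<in> S (n - 1)" using down[OF e x] by simp
      then show ?thesis unfolding u_def by (intro suminf_mult[symmetric] gform.summ[OF gf])
    qed
  qed
  also have "\<dots> = (\<Sum>k. \<Sum>x\<in>{0..N+1}. u x k)" by (rule suminf_sum[symmetric]) (rule su)
  also have "\<dots> = (\<Sum>k. t ^ k / fact k * (Q ^^ k) (annihA N f) \<eta>)"
  proof (rule suminf_cong)
    fix k
    have "(\<Sum>x\<in>{0..N+1}. u x k) = t ^ k / fact k * annihA N ((Q ^^ k) f) \<eta>"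
      unfolding u_def annihA_def sum_distrib_left by (rule sum.cong) (simp_all add: mult_ac)
    then show "(\<Sum>x\<in>{0..N+1}. u x k) = t ^ k / fact k * (Q ^^ k) (annihA N f) \<eta>"
      using C1[OF e] by simp
  qed
  finally show ?thesis unfolding semigroup_def .
qed

lemma C3: "\<eta> \<in> S n \<Longrightarrow> (annihA N ^^ m) (semigroup Q t f) \<eta> = semigroup Q t ((annihA N ^^ m) f) \<eta>"
proof (induction m arbitrary: n \<eta>)
  case 0 then show ?case by simp
next
  case (Suc m)
  have "(annihA N ^^ Suc m) (semigroup Q t f) \<eta> = annihA N ((annihA N ^^ m) (semigroup Q t f)) \<eta>" by simp
  also have "\<dots> = annihA N (semigroup Q t ((annihA N ^^ m) f)) \<eta>"
    by (rule A_loc[OF Suc.prems]) (use Suc.IH in blast)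
  also have "\<dots> = semigroup Q t (annihA N ((annihA N ^^ m) f)) \<eta>" by (rule C2[OF Suc.prems])
  finally show ?case by simp
qed

end

lemma irw_term:
  fixes \<eta> :: conf and f :: "conf \<Rightarrow> real"
  assumes xy: "x \<noteq> y" and pos: "0 < \<eta> x"
  shows "real (\<eta> x) * (real ((\<eta>(x := \<eta> x - 1, y := \<eta> y + 1)) u) *
            f ((\<eta>(x := \<eta> x - 1, y := \<eta> y + 1))(u := (\<eta>(x := \<eta> x - 1, y := \<eta> y + 1)) u - 1)))
       - real (\<eta> x) * (real (\<eta> u) * f (\<eta>(u := \<eta> u - 1)))
       - real (\<eta> u) * (real ((\<eta>(u := \<eta> u - 1)) x) *
            (f ((\<eta>(u := \<eta> u - 1))(x := (\<eta>(u := \<eta> u - 1)) x - 1, y := (\<eta>(u := \<eta> u - 1)) y + 1))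
             - f (\<eta>(u := \<eta> u - 1))))
     = (if u = y then real (\<eta> x) * f (\<eta>(x := \<eta> x - 1))
        else if u = x then - real (\<eta> x) * f (\<eta>(x := \<eta> x - 1)) else 0)"
proof -
  consider (Y) "u = y" | (X) "u = x" | (O) "u \<noteq> x" "u \<noteq> y" by blast
  then show ?thesis
  proof cases
    case Y
    have c1: "(\<eta>(x := \<eta> x - 1, y := \<eta> y + 1))(y := (\<eta>(x := \<eta> x - 1, y := \<eta> y + 1)) y - 1) = \<eta>(x := \<eta> x - 1)"
      using xy by (auto simp: fun_eq_iff)
    show ?thesis
    proof (cases "\<eta> y = 0")
      case True
      then show ?thesis using Y xy c1 by (simp add: algebra_simps)
    next
      case False
      have c2: "(\<eta>(y := \<eta> y - 1))(x := (\<eta>(y := \<eta> y - 1)) x - 1, y := (\<eta>(y := \<eta> y - 1)) y + 1) = \<eta>(x := \<eta> x - 1)"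
        using xy False by (auto simp: fun_eq_iff)
      show ?thesis using Y xy c1 c2 by (simp add: algebra_simps)
    qed
  next
    case X
    have c: "(\<eta>(x := \<eta> x - 1))(x := (\<eta>(x := \<eta> x - 1)) x - 1, y := (\<eta>(x := \<eta> x - 1)) y + 1) =
             (\<eta>(x := \<eta> x - 1, y := \<eta> y + 1))(x := (\<eta>(x := \<eta> x - 1, y := \<eta> y + 1)) x - 1)"
      using xy by (auto simp: fun_eq_iff)
    have r: "real (\<eta> x - 1) = real (\<eta> x) - 1" using pos by (simp add: of_nat_diff)
    show ?thesis using X xy c r by (simp add: algebra_simps)
  next
    case O
    have c: "(\<eta>(u := \<eta> u - 1))(x := (\<eta>(u := \<eta> u - 1)) x - 1, y := (\<eta>(u := \<eta> u - 1)) y + 1) =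
             (\<eta>(x := \<eta> x - 1, y := \<eta> y + 1))(u := (\<eta>(x := \<eta> x - 1, y := \<eta> y + 1)) u - 1)"
      using xy O by (auto simp: fun_eq_iff)
    show ?thesis using O xy c by (simp add: algebra_simps)
  qed
qed


lemma irw_pair:
  fixes \<eta> :: conf and f :: "conf \<Rightarrow> real"
  assumes x: "x \<in> {0..N+1}" and y: "y \<in> {0..N+1}" and xy: "x \<noteq> y"
  shows "real (\<eta> x) * (annihA N f (\<eta>(x := \<eta> x - 1, y := \<eta> y + 1)) - annihA N f \<eta>) =
    (\<Sum>u\<in>{0..N+1}. real (\<eta> u) * (real ((\<eta>(u := \<eta> u - 1)) x) *
            (f ((\<eta>(u := \<eta> u - 1))(x := (\<eta>(u := \<eta> u - 1)) x - 1, y := (\<eta>(u := \<eta> u - 1)) y + 1))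
             - f (\<eta>(u := \<eta> u - 1)))))"
proof (cases "\<eta> x = 0")
  case True
  have "\<And>u. (\<eta>(u := \<eta> u - 1)) x = 0"
  proof -
    fix u show "(\<eta>(u := \<eta> u - 1)) x = 0" using True by (cases "u = x") simp_all
  qed
  then show ?thesis using True by simp
next
  case False
  then have pos: "0 < \<eta> x" by simp
  define a where "a = real (\<eta> x) * f (\<eta>(x := \<eta> x - 1))"
  define A where "A = (\<lambda>u. real ((\<eta>(x := \<eta> x - 1, y := \<eta> y + 1)) u) *
            f ((\<eta>(x := \<eta> x - 1, y := \<eta> y + 1))(u := (\<eta>(x := \<eta> x - 1, y := \<eta> y + 1)) u - 1)))"
  define B where "B = (\<lambda>u. real (\<eta> u) * f (\<eta>(u := \<eta> u - 1)))"
  define C where "C = (\<lambda>u. real (\<eta> u) * (real ((\<eta>(u := \<eta> u - 1)) x) *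
            (f ((\<eta>(u := \<eta> u - 1))(x := (\<eta>(u := \<eta> u - 1)) x - 1, y := (\<eta>(u := \<eta> u - 1)) y + 1))
             - f (\<eta>(u := \<eta> u - 1)))))"
  have eA: "annihA N f (\<eta>(x := \<eta> x - 1, y := \<eta> y + 1)) = sum A {0..N+1}" unfolding annihA_def A_def ..
  have eB: "annihA N f \<eta> = sum B {0..N+1}" unfolding annihA_def B_def ..
  have eC: "(\<Sum>u\<in>{0..N+1}. real (\<eta> u) * (real ((\<eta>(u := \<eta> u - 1)) x) *
            (f ((\<eta>(u := \<eta> u - 1))(x := (\<eta>(u := \<eta> u - 1)) x - 1, y := (\<eta>(u := \<eta> u - 1)) y + 1))
             - f (\<eta>(u := \<eta> u - 1))))) = sum C {0..N+1}" unfolding C_def ..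
  have trm: "real (\<eta> x) * A u - real (\<eta> x) * B u - C u = (if u = y then a else if u = x then - a else 0)" for u
    unfolding A_def B_def C_def a_def using irw_term[where \<eta>=\<eta> and x=x and y=y and u=u and f=f, OF xy pos] by simp
  have "real (\<eta> x) * (sum A {0..N+1} - sum B {0..N+1}) - sum C {0..N+1}
      = (\<Sum>u\<in>{0..N+1}. real (\<eta> x) * A u - real (\<eta> x) * B u - C u)"
    by (simp only: sum_subtractf sum_distrib_left right_diff_distrib)
  also have "\<dots> = (\<Sum>u\<in>{0..N+1}. (if u = y then a else if u = x then - a else 0))"
    using trm by simp
  also have "\<dots> = (\<Sum>u\<in>{0..N+1}. (if u = y then a else 0)) + (\<Sum>u\<in>{0..N+1}. (if u = x then - a else 0))"
    unfolding sum.distrib[symmetric] by (rule sum.cong) (use xy in auto)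
  also have "\<dots> = 0" using x y by simp
  finally show ?thesis unfolding eA eB eC by simp
qed

lemma irw_comm:
  fixes \<eta> :: conf and f :: "conf \<Rightarrow> real"
  shows "genIRW N Lam c r (annihA N f) \<eta> = annihA N (genIRW N Lam c r f) \<eta>"
proof -
  let ?D = "{0..N+1}"
  let ?q = "rw_rate N Lam c r"
  let ?F = "\<lambda>x y u. real (\<eta> u) * (real ((\<eta>(u := \<eta> u - 1)) x) * ?q x y *
            (f ((\<eta>(u := \<eta> u - 1))(x := (\<eta>(u := \<eta> u - 1)) x - 1, y := (\<eta>(u := \<eta> u - 1)) y + 1))
             - f (\<eta>(u := \<eta> u - 1))))"
  have "genIRW N Lam c r (annihA N f) \<eta> = (\<Sum>x\<in>?D. \<Sum>y\<in>?D - {x}. \<Sum>u\<in>?D. ?F x y u)"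
    unfolding genIRW_def
  proof (intro sum.cong refl)
    fix x y assume x: "x \<in> ?D" and y: "y \<in> ?D - {x}"
    have yD: "y \<in> ?D" and xy: "x \<noteq> y" using y by auto
    have "real (\<eta> x) * ?q x y * (annihA N f (\<eta>(x := \<eta> x - 1, y := \<eta> y + 1)) - annihA N f \<eta>) =
       ?q x y * (real (\<eta> x) * (annihA N f (\<eta>(x := \<eta> x - 1, y := \<eta> y + 1)) - annihA N f \<eta>))"
      by (simp add: mult_ac)
    also have "\<dots> = ?q x y * (\<Sum>u\<in>?D. real (\<eta> u) * (real ((\<eta>(u := \<eta> u - 1)) x) *
            (f ((\<eta>(u := \<eta> u - 1))(x := (\<eta>(u := \<eta> u - 1)) x - 1, y := (\<eta>(u := \<eta> u - 1)) y + 1))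
             - f (\<eta>(u := \<eta> u - 1)))))"
      by (subst irw_pair[OF x yD xy]) (rule refl)
    also have "\<dots> = (\<Sum>u\<in>?D. ?F x y u)"
      unfolding sum_distrib_left by (rule sum.cong) (simp_all add: mult_ac)
    finally show "real (\<eta> x) * ?q x y * (annihA N f (\<eta>(x := \<eta> x - 1, y := \<eta> y + 1)) - annihA N f \<eta>) =
       (\<Sum>u\<in>?D. ?F x y u)" .
  qed
  also have "\<dots> = (\<Sum>x\<in>?D. \<Sum>u\<in>?D. \<Sum>y\<in>?D - {x}. ?F x y u)"
    by (rule sum.cong[OF refl], rule sum.swap)
  also have "\<dots> = (\<Sum>u\<in>?D. \<Sum>x\<in>?D. \<Sum>y\<in>?D - {x}. ?F x y u)"
    by (rule sum.swap)
  also have "\<dots> = annihA N (genIRW N Lam c r f) \<eta>"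
    unfolding annihA_def genIRW_def sum_distrib_left by (intro sum.cong refl)
  finally show ?thesis .
qed

context setting begin

lemma gfamL: "gfam N SL QL PL wL TL"
proof (rule gfam.intro)
  fix n show "gform (SL n) QL PL wL TL" by (rule gformL)
next
  fix n \<eta> x assume e: "\<eta> \<in> SL n" and x: "x \<in> {0..N+1}" and pos: "0 < \<eta> x"
  have v: "valid N Lam \<eta>" and tn: "tot N \<eta> = n" using e by (auto simp: SL_def)
  have "valid N Lam (\<eta>(x := \<eta> x - 1))" unfolding valid_def
  proof (intro conjI allI impI ballI)
    fix y :: nat assume y: "y \<notin> {0..N+1}"
    then have "y \<noteq> x" using x by auto
    then show "(\<eta>(x := \<eta> x - 1)) y = 0" using v y unfolding valid_def by simp
  next
    fix k assume k: "k \<in> {1..N}"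
    have "\<eta> k \<in> Lam" using v k unfolding valid_def by blast
    moreover have "\<eta> k - 1 \<in> Lam" using calculation by (meson Ldown diff_le_self)
    ultimately show "(\<eta>(x := \<eta> x - 1)) k \<in> Lam" by (cases "k = x") simp_all
  qed
  moreover have "tot N (\<eta>(x := \<eta> x - 1)) = n - 1" using tot_dec[where \<eta>=\<eta>, OF x pos] tn by simp
  ultimately show "\<eta>(x := \<eta> x - 1) \<in> SL (n - 1)" by (simp add: SL_def)
next
  fix n \<eta> f assume e: "\<eta> \<in> SL n"
  then have "valid N Lam \<eta>" by (simp add: SL_def)
  then show "QL (annihA N f) \<eta> = annihA N (QL f) \<eta>" using cons unfolding consistent_def by blast
qed

lemma gfamI: "gfam N SI QI PI wI TI"
proof (rule gfam.intro)
  fix n show "gform (SI n) QI PI wI TI" by (rule gformI)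
next
  fix n \<eta> x assume e: "\<eta> \<in> SI n" and x: "x \<in> {0..N+1}" and pos: "0 < \<eta> x"
  have s: "supp N \<eta>" and tn: "tot N \<eta> = n" using e by (auto simp: SI_def)
  have "supp N (\<eta>(x := \<eta> x - 1))" unfolding supp_def
  proof (intro allI impI)
    fix y :: nat assume y: "y \<notin> {0..N+1}"
    then have "y \<noteq> x" using x by auto
    then show "(\<eta>(x := \<eta> x - 1)) y = 0" using s y unfolding supp_def by simp
  qed
  moreover have "tot N (\<eta>(x := \<eta> x - 1)) = n - 1" using tot_dec[where \<eta>=\<eta>, OF x pos] tn by simp
  ultimately show "\<eta>(x := \<eta> x - 1) \<in> SI (n - 1)" by (simp add: SI_def)
next
  fix n \<eta> f show "QI (annihA N f) \<eta> = annihA N (QI f) \<eta>" by (rule irw_comm)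
qed

end

lemma phi_Cons: "phi (a # ys) = (\<lambda>u. phi ys u + (if a = u then 1 else 0))"
  unfolding phi_def by auto

lemma phi_Nil: "phi [] = (\<lambda>u. 0)"
  unfolding phi_def by simp

lemma tot_phi: "set ys \<subseteq> {0..N+1} \<Longrightarrow> tot N (phi ys) = length ys"
proof (induction ys)
  case Nil then show ?case by (simp add: tot_def phi_Nil)
next
  case (Cons a ys)
  have "tot N (phi (a # ys)) = tot N (phi ys) + (\<Sum>u\<in>{0..N+1}. if a = u then 1 else 0)"
    unfolding tot_def phi_Cons by (simp add: sum.distrib)
  also have "(\<Sum>u\<in>{0..N+1}. (if a = u then 1 else 0::nat)) = 1" using Cons.prems by simp
  finally show ?case using Cons by simp
qed

lemma supp_phi: "set ys \<subseteq> {0..N+1} \<Longrightarrow> supp N (phi ys)"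
  unfolding supp_def phi_def by (auto simp: filter_empty_conv)

lemma phi_nths: "phi (nths xs S) u = card {i. i < length xs \<and> i \<in> S \<and> xs ! i = u}"
proof -
  have "phi (nths xs S) u = length (filter (\<lambda>p. snd p \<in> S \<and> fst p = u) (zip xs [0..<length xs]))"
    unfolding phi_def nths_def by (simp add: filter_map filter_filter comp_def)
  also have "\<dots> = card {i. i < length xs \<and> i \<in> S \<and> xs ! i = u}"
    unfolding length_filter_conv_card by (intro arg_cong[where f=card]) auto
  finally show ?thesis .
qed

lemma absorb_nat:
  fixes a n k :: nat
  assumes "a \<le> n"
  shows "a * (n - a choose k) + (n - a) * (n - a - 1 choose k) = (n - k) * (n - a choose k)"
proof -
  have b: "(n - a - k) * (n - a choose k) = (n - a) * (n - a - 1 choose k)" by (rule binomial_absorb_comp)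
  show ?thesis
  proof (cases "k \<le> n - a")
    case True
    then have "a + (n - a - k) = n - k" using assms by simp
    then show ?thesis using b by (metis add_mult_distrib)
  next
    case False
    then have z1: "(n - a choose k) = 0" by simp
    have z2: "(n - a - 1 choose k) = 0" using False by simp
    show ?thesis by (simp only: z1 z2 mult_0_right add_0)
  qed
qed

lemma A_f0:
  "supp N \<eta> \<Longrightarrow> tot N \<eta> = j + k \<Longrightarrow> (annihA N ^^ j) f0 \<eta> = fact j * real (tot N \<eta> - \<eta> 0 choose k)"
proof (induction j arbitrary: \<eta>)
  case 0
  have le: "\<eta> 0 \<le> k" using le_tot[of 0 N \<eta>] 0 by simp
  show ?case
  proof (cases "\<eta> 0 = 0")
    case True then show ?thesis using 0 by (simp add: f0_def)
  next
    case False
    then have zeroC: "(k - \<eta> 0 choose k) = 0" using le by simp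
    have "(annihA N ^^ 0) f0 \<eta> = 0" using False by (simp add: f0_def)
    also have "0 = fact 0 * real (tot N \<eta> - \<eta> 0 choose k)" using zeroC 0(2) by simp
    finally show ?thesis .
  qed
next
  case (Suc j)
  define n where "n = tot N \<eta>"
  define a where "a = \<eta> 0"
  have an: "a \<le> n" unfolding a_def n_def by (rule le_tot) simp
  have nk: "n = Suc j + k" using Suc.prems n_def by simp
  have step: "real (\<eta> x) * (annihA N ^^ j) f0 (\<eta>(x := \<eta> x - 1)) =
      fact j * (real (\<eta> x) * real (n - 1 - (\<eta>(x := \<eta> x - 1)) 0 choose k))" if x: "x \<in> {0..N+1}" for x
  proof (cases "\<eta> x = 0")
    case True then show ?thesis by simp
  next
    case False
    have s: "supp N (\<eta>(x := \<eta> x - 1))" using Suc.prems(1) x unfolding supp_def by auto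
    have t: "tot N (\<eta>(x := \<eta> x - 1)) = n - 1" using tot_dec[where \<eta>=\<eta>, OF x] False n_def by simp
    have t2: "tot N (\<eta>(x := \<eta> x - 1)) = j + k" using t nk by simp
    have eq: "(annihA N ^^ j) f0 (\<eta>(x := \<eta> x - 1)) = fact j * real (n - 1 - (\<eta>(x := \<eta> x - 1)) 0 choose k)"
      using Suc.IH[OF s t2] unfolding t .
    show ?thesis unfolding eq by (simp only: mult_ac)
  qed
  have "(annihA N ^^ Suc j) f0 \<eta> = (\<Sum>x\<in>{0..N+1}. real (\<eta> x) * (annihA N ^^ j) f0 (\<eta>(x := \<eta> x - 1)))"
    by (simp add: annihA_def)
  also have "\<dots> = fact j * (\<Sum>x\<in>{0..N+1}. real (\<eta> x) * real (n - 1 - (\<eta>(x := \<eta> x - 1)) 0 choose k))"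
    unfolding sum_distrib_left by (rule sum.cong[OF refl]) (rule step)
  also have "(\<Sum>x\<in>{0..N+1}. real (\<eta> x) * real (n - 1 - (\<eta>(x := \<eta> x - 1)) 0 choose k)) =
      real (a * (n - a choose k) + (n - a) * (n - a - 1 choose k))"
  proof -
    have r: "(\<Sum>x\<in>{0..N+1}. real (\<eta> x) * real (n - 1 - (\<eta>(x := \<eta> x - 1)) 0 choose k)) =
       real (\<eta> 0) * real (n - 1 - (\<eta> 0 - 1) choose k) +
       (\<Sum>x\<in>{0..N+1} - {0}. real (\<eta> x) * real (n - 1 - (\<eta>(x := \<eta> x - 1)) 0 choose k))"
      by (subst sum.remove[of _ 0]) simp_all
    have r2: "(\<Sum>x\<in>{0..N+1} - {0}. real (\<eta> x) * real (n - 1 - (\<eta>(x := \<eta> x - 1)) 0 choose k)) =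
        (\<Sum>x\<in>{0..N+1} - {0}. real (\<eta> x)) * real (n - a - 1 choose k)"
      unfolding sum_distrib_right by (rule sum.cong) (auto simp: a_def)
    have r3: "(\<Sum>x\<in>{0..N+1} - {0}. \<eta> x) = n - a"
      using sum.remove[of "{0..N+1}" 0 \<eta>] unfolding n_def a_def tot_def by simp
    have r4: "real (\<eta> 0) * real (n - 1 - (\<eta> 0 - 1) choose k) = real (a * (n - a choose k))"
    proof (cases "a = 0")
      case True then show ?thesis by (simp add: a_def)
    next
      case False
      then have "n - 1 - (a - 1) = n - a" using an by simp
      then show ?thesis by (simp add: a_def)
    qed
    have "(\<Sum>x\<in>{0..N+1} - {0}. real (\<eta> x)) = real (n - a)"
      using r3 by (metis of_nat_sum)
    then show ?thesis unfolding r r2 r4 by simp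
  qed
  also have "\<dots> = real ((n - k) * (n - a choose k))" using absorb_nat[OF an] by simp
  finally show ?case using nk unfolding n_def a_def by (simp add: algebra_simps)
qed

lemma zpow_expand:
  fixes z :: real
  assumes s: "supp N \<eta>" and t: "tot N \<eta> = n"
  shows "z ^ (\<eta> 0) = (\<Sum>k\<in>{0..n}. z ^ (n - k) * (1 - z) ^ k * real (n - \<eta> 0 choose k))"
proof -
  define a where "a = \<eta> 0"
  have an: "a \<le> n" unfolding a_def using le_tot[of 0 N \<eta>] t by simp
  have "z ^ a = z ^ a * ((1 - z) + z) ^ (n - a)" by simp
  also have "\<dots> = (\<Sum>k\<le>n - a. z ^ a * (real (n - a choose k) * (1 - z) ^ k * z ^ (n - a - k)))"
    unfolding binomial_ring sum_distrib_left ..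
  also have "\<dots> = (\<Sum>k\<le>n - a. z ^ (n - k) * (1 - z) ^ k * real (n - a choose k))"
  proof (rule sum.cong[OF refl])
    fix k assume "k \<in> {..n - a}"
    then have "a + (n - a - k) = n - k" using an by auto
    then have "z ^ a * z ^ (n - a - k) = z ^ (n - k)" by (metis power_add)
    then show "z ^ a * (real (n - a choose k) * (1 - z) ^ k * z ^ (n - a - k)) = z ^ (n - k) * (1 - z) ^ k * real (n - a choose k)"
      by (simp add: mult_ac)
  qed
  also have "\<dots> = (\<Sum>k\<in>{0..n}. z ^ (n - k) * (1 - z) ^ k * real (n - a choose k))"
    by (rule sum.mono_neutral_left) auto
  finally show ?thesis unfolding a_def .
qed

lemma zpow_A:
  fixes z :: real
  assumes s: "supp N \<eta>" and t: "tot N \<eta> = n"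
  shows "z ^ (\<eta> 0) = (\<Sum>k\<in>{0..n}. (z ^ (n - k) * (1 - z) ^ k / fact (n - k)) * (annihA N ^^ (n - k)) f0 \<eta>)"
  unfolding zpow_expand[OF s t]
proof (rule sum.cong[OF refl])
  fix k assume "k \<in> {0..n}"
  then have kn: "tot N \<eta> = (n - k) + k" using t by simp
  have A: "(annihA N ^^ (n - k)) f0 \<eta> = fact (n - k) * real (n - \<eta> 0 choose k)"
    using A_f0[OF s kn] t by simp
  show "z ^ (n - k) * (1 - z) ^ k * real (n - \<eta> 0 choose k) =
     z ^ (n - k) * (1 - z) ^ k / fact (n - k) * (annihA N ^^ (n - k)) f0 \<eta>"
    unfolding A by simp
qed

lemma phi_nths': "S \<subseteq> {..<length xs} \<Longrightarrow> phi (nths xs S) u = card {i\<in>S. xs ! i = u}"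
  unfolding phi_nths by (intro arg_cong[where f=card]) auto

lemma phi_nths_remove:
  assumes S: "S \<subseteq> {..<length xs}" and i: "i \<in> S"
  shows "phi (nths xs (S - {i})) = (phi (nths xs S))(xs ! i := phi (nths xs S) (xs ! i) - 1)"
proof
  fix v
  have fin: "finite S" using S finite_subset by blast
  have S': "S - {i} \<subseteq> {..<length xs}" using S by auto
  show "phi (nths xs (S - {i})) v = ((phi (nths xs S))(xs ! i := phi (nths xs S) (xs ! i) - 1)) v"
  proof (cases "v = xs ! i")
    case True
    have "{j \<in> S - {i}. xs ! j = v} = {j \<in> S. xs ! j = v} - {i}" by auto
    moreover have "card ({j \<in> S. xs ! j = v} - {i}) = card {j \<in> S. xs ! j = v} - 1"
      using fin i True by (intro card_Diff_singleton) auto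
    ultimately show ?thesis using True unfolding phi_nths'[OF S'] phi_nths'[OF S] by simp
  next
    case False
    have "{j \<in> S - {i}. xs ! j = v} = {j \<in> S. xs ! j = v}" using False by auto
    then show ?thesis using False unfolding phi_nths'[OF S'] phi_nths'[OF S] by simp
  qed
qed

lemma A_phi:
  assumes xs: "set xs \<subseteq> {0..N+1}" and S: "S \<subseteq> {..<length xs}"
  shows "annihA N h (phi (nths xs S)) = (\<Sum>i\<in>S. h (phi (nths xs (S - {i}))))"
proof -
  have fin: "finite S" using S finite_subset by blast
  let ?p = "phi (nths xs S)"
  have img: "(\<lambda>i. xs ! i) ` S \<subseteq> {0..N+1}"
  proof
    fix u assume "u \<in> (\<lambda>i. xs ! i) ` S"
    then obtain i where i: "i \<in> S" "u = xs ! i" by blast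
    then have "i < length xs" using S by auto
    then have "xs ! i \<in> set xs" by (rule nth_mem)
    then show "u \<in> {0..N+1}" using xs i by blast
  qed
  have "(\<Sum>i\<in>S. h (phi (nths xs (S - {i})))) =
      (\<Sum>u\<in>{0..N+1}. \<Sum>i\<in>{i. i \<in> S \<and> xs ! i = u}. h (phi (nths xs (S - {i}))))"
    by (rule sum.group[OF fin finite_atLeastAtMost img, symmetric])
  also have "\<dots> = (\<Sum>u\<in>{0..N+1}. real (?p u) * h (?p(u := ?p u - 1)))"
  proof (rule sum.cong[OF refl])
    fix u
    have "(\<Sum>i\<in>{i. i \<in> S \<and> xs ! i = u}. h (phi (nths xs (S - {i})))) =
        (\<Sum>i\<in>{i. i \<in> S \<and> xs ! i = u}. h (?p(u := ?p u - 1)))"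
      by (rule sum.cong[OF refl]) (simp add: phi_nths_remove[OF S])
    also have "\<dots> = real (card {i. i \<in> S \<and> xs ! i = u}) * h (?p(u := ?p u - 1))" by simp
    also have "card {i. i \<in> S \<and> xs ! i = u} = ?p u" using phi_nths'[OF S] by simp
    finally show "(\<Sum>i\<in>{i. i \<in> S \<and> xs ! i = u}. h (phi (nths xs (S - {i})))) =
        real (?p u) * h (?p(u := ?p u - 1))" .
  qed
  finally show ?thesis unfolding annihA_def by simp
qed

lemma dcount:
  fixes g :: "nat set \<Rightarrow> real"
  assumes fin: "finite S0" and k: "Suc k \<le> card S0"
  shows "(\<Sum>S\<in>{S. S \<subseteq> S0 \<and> card S = Suc k}. \<Sum>i\<in>S. g (S - {i})) =
         real (card S0 - k) * (\<Sum>T\<in>{T. T \<subseteq> S0 \<and> card T = k}. g T)"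
proof -
  define A1 where "A1 = {S. S \<subseteq> S0 \<and> card S = Suc k}"
  define A0 where "A0 = {T. T \<subseteq> S0 \<and> card T = k}"
  have f1: "finite A1" unfolding A1_def by (rule finite_subset[of _ "Pow S0"]) (blast, simp add: fin)
  have f0: "finite A0" unfolding A0_def by (rule finite_subset[of _ "Pow S0"]) (blast, simp add: fin)
  have fS: "finite S" if "S \<subseteq> S0" for S using fin that by (rule rev_finite_subset)
  have "(\<Sum>S\<in>A1. \<Sum>i\<in>S. g (S - {i})) = (\<Sum>(S, i)\<in>Sigma A1 (\<lambda>S. S). g (S - {i}))"
  proof (rule sum.Sigma[OF f1])
    show "\<forall>S\<in>A1. finite S" unfolding A1_def using fS by blast
  qed
  also have "\<dots> = (\<Sum>(T, i)\<in>Sigma A0 (\<lambda>T. S0 - T). g T)"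
  proof (rule sum.reindex_bij_witness[where j = "\<lambda>(S, i). (S - {i}, i)" and i = "\<lambda>(T, i). (insert i T, i)"])
    fix a assume "a \<in> Sigma A1 (\<lambda>S. S)"
    then obtain S i where a: "a = (S, i)" "S \<subseteq> S0" "card S = Suc k" "i \<in> S" unfolding A1_def by blast
    have c: "card (S - {i}) = k" using a fS[OF a(2)] by (simp add: card_Diff_singleton)
    show "(case (case a of (S, i) \<Rightarrow> (S - {i}, i)) of (T, i) \<Rightarrow> (insert i T, i)) = a"
      using a by (simp add: insert_absorb)
    have "S - {i} \<in> A0" unfolding A0_def using a c by blast
    moreover have "i \<in> S0 - (S - {i})" using a by blast
    ultimately show "(case a of (S, i) \<Rightarrow> (S - {i}, i)) \<in> Sigma A0 (\<lambda>T. S0 - T)"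
      using a by simp
    show "(case (case a of (S, i) \<Rightarrow> (S - {i}, i)) of (T, i) \<Rightarrow> g T) = (case a of (S, i) \<Rightarrow> g (S - {i}))"
      using a by simp
  next
    fix b assume "b \<in> Sigma A0 (\<lambda>T. S0 - T)"
    then obtain T i where b: "b = (T, i)" "T \<subseteq> S0" "card T = k" "i \<in> S0" "i \<notin> T" unfolding A0_def by blast
    have c: "card (insert i T) = Suc k" using b fS[OF b(2)] by simp
    show "(case (case b of (T, i) \<Rightarrow> (insert i T, i)) of (S, i) \<Rightarrow> (S - {i}, i)) = b"
      using b by simp
    have "insert i T \<in> A1" unfolding A1_def using b c by blast
    then show "(case b of (T, i) \<Rightarrow> (insert i T, i)) \<in> Sigma A1 (\<lambda>S. S)"
      using b by simp
  qed
  also have "\<dots> = (\<Sum>T\<in>A0. \<Sum>i\<in>S0 - T. g T)"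
    by (rule sum.Sigma[symmetric]) (use f0 fin in blast)+
  also have "\<dots> = (\<Sum>T\<in>A0. real (card S0 - k) * g T)"
  proof (rule sum.cong[OF refl])
    fix T assume "T \<in> A0"
    then have T: "T \<subseteq> S0" "card T = k" unfolding A0_def by blast+
    then have "card (S0 - T) = card S0 - k" using fS[OF T(1)] by (simp add: card_Diff_subset)
    then show "(\<Sum>i\<in>S0 - T. g T) = real (card S0 - k) * g T" by simp
  qed
  finally show ?thesis unfolding A1_def A0_def by (simp add: sum_distrib_left)
qed

lemma A_pow_phi:
  assumes xs: "set xs \<subseteq> {0..N+1}" and S0: "S0 \<subseteq> {..<length xs}" and m: "m \<le> card S0"
  shows "(annihA N ^^ m) h (phi (nths xs S0)) =
     fact m * (\<Sum>S\<in>{S. S \<subseteq> S0 \<and> card S = card S0 - m}. h (phi (nths xs S)))"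
  using m
proof (induction m arbitrary: h)
  case 0
  have fin: "finite S0" using S0 finite_subset by blast
  have "{S. S \<subseteq> S0 \<and> card S = card S0} = {S0}"
  proof
    show "{S. S \<subseteq> S0 \<and> card S = card S0} \<subseteq> {S0}"
    proof
      fix S assume "S \<in> {S. S \<subseteq> S0 \<and> card S = card S0}"
      then have "S = S0" using card_subset_eq[OF fin] by blast
      then show "S \<in> {S0}" by simp
    qed
  qed simp
  then show ?case by simp
next
  case (Suc m)
  have fin: "finite S0" using S0 finite_subset by blast
  have "(annihA N ^^ Suc m) h (phi (nths xs S0)) = (annihA N ^^ m) (annihA N h) (phi (nths xs S0))"
    by (simp add: funpow_Suc_right del: funpow.simps)
  also have "\<dots> = fact m * (\<Sum>S\<in>{S. S \<subseteq> S0 \<and> card S = card S0 - m}. annihA N h (phi (nths xs S)))"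
    using Suc by simp
  also have "(\<Sum>S\<in>{S. S \<subseteq> S0 \<and> card S = card S0 - m}. annihA N h (phi (nths xs S))) =
       (\<Sum>S\<in>{S. S \<subseteq> S0 \<and> card S = Suc (card S0 - Suc m)}. \<Sum>i\<in>S. h (phi (nths xs (S - {i}))))"
  proof -
    have e: "card S0 - m = Suc (card S0 - Suc m)" using Suc.prems by simp
    show ?thesis unfolding e
    proof (rule sum.cong[OF refl])
      fix S assume "S \<in> {S. S \<subseteq> S0 \<and> card S = Suc (card S0 - Suc m)}"
      then have "S \<subseteq> {..<length xs}" using S0 by blast
      then show "annihA N h (phi (nths xs S)) = (\<Sum>i\<in>S. h (phi (nths xs (S - {i}))))" by (rule A_phi[OF xs])
    qed
  qed
  also have "\<dots> = real (card S0 - (card S0 - Suc m)) * (\<Sum>T\<in>{T. T \<subseteq> S0 \<and> card T = card S0 - Suc m}. h (phi (nths xs T)))"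
    by (rule dcount[OF fin]) (use Suc.prems in simp)
  also have "card S0 - (card S0 - Suc m) = Suc m" using Suc.prems by simp
  finally show ?case by (simp add: algebra_simps)
qed

context gfam begin

lemma finite_time:
  fixes z :: real
  assumes xs: "set xs \<subseteq> {0..N+1}" and e: "phi xs \<in> S (length xs)"
    and Ssupp: "\<And>\<zeta>. \<zeta> \<in> S (length xs) \<Longrightarrow> supp N \<zeta> \<and> tot N \<zeta> = length xs"
  shows "semigroup Q t (\<lambda>\<zeta>. z ^ \<zeta> 0) (phi xs) =
    (\<Sum>k\<in>{0..length xs}. z ^ (length xs - k) * (1 - z) ^ k *
        (\<Sum>S'\<in>{S'. S' \<subseteq> {..<length xs} \<and> card S' = k}. semigroup Q t f0 (phi (nths xs S'))))"
proof -
  define n where "n = length xs"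
  define ck where "ck = (\<lambda>k. z ^ (n - k) * (1 - z) ^ k / fact (n - k))"
  have gfn: "gform (S n) Q P w T" by (rule gf)
  have en: "phi xs \<in> S n" using e n_def by simp
  have "semigroup Q t (\<lambda>\<zeta>. z ^ \<zeta> 0) (phi xs) =
      semigroup Q t (\<lambda>\<zeta>. \<Sum>k\<in>{0..n}. ck k * (annihA N ^^ (n - k)) f0 \<zeta>) (phi xs)"
  proof (rule gform.sg_loc[OF gfn en])
    show "\<forall>x\<in>S n. z ^ x 0 = (\<Sum>k\<in>{0..n}. ck k * (annihA N ^^ (n - k)) f0 x)"
    proof
      fix x assume "x \<in> S n"
      then have "supp N x" "tot N x = n" using Ssupp n_def by auto
      then show "z ^ x 0 = (\<Sum>k\<in>{0..n}. ck k * (annihA N ^^ (n - k)) f0 x)"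
        unfolding ck_def by (rule zpow_A)
    qed
  qed
  also have "\<dots> = (\<Sum>k\<in>{0..n}. ck k * semigroup Q t ((annihA N ^^ (n - k)) f0) (phi xs))"
    by (rule gform.sg_lin[OF gfn en]) simp
  also have "\<dots> = (\<Sum>k\<in>{0..n}. ck k * (annihA N ^^ (n - k)) (semigroup Q t f0) (phi xs))"
    using C3[OF en] by simp
  also have "\<dots> = (\<Sum>k\<in>{0..n}. z ^ (n - k) * (1 - z) ^ k *
        (\<Sum>S'\<in>{S'. S' \<subseteq> {..<n} \<and> card S' = k}. semigroup Q t f0 (phi (nths xs S'))))"
  proof (rule sum.cong[OF refl])
    fix k assume k: "k \<in> {0..n}"
    have sub: "{..<length xs} \<subseteq> {..<length xs}" by simp
    have "(annihA N ^^ (n - k)) (semigroup Q t f0) (phi (nths xs {..<length xs})) =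
        fact (n - k) * (\<Sum>S'\<in>{S'. S' \<subseteq> {..<length xs} \<and> card S' = card {..<length xs} - (n - k)}.
            semigroup Q t f0 (phi (nths xs S')))"
      by (rule A_pow_phi[OF xs sub]) (use k n_def in simp)
    moreover have "nths xs {..<length xs} = xs" by simp
    moreover have "card {..<length xs} - (n - k) = k" using k n_def by simp
    ultimately have "(annihA N ^^ (n - k)) (semigroup Q t f0) (phi xs) =
        fact (n - k) * (\<Sum>S'\<in>{S'. S' \<subseteq> {..<n} \<and> card S' = k}. semigroup Q t f0 (phi (nths xs S')))"
      using n_def by simp
    then show "ck k * (annihA N ^^ (n - k)) (semigroup Q t f0) (phi xs) =
      z ^ (n - k) * (1 - z) ^ k * (\<Sum>S'\<in>{S'. S' \<subseteq> {..<n} \<and> card S' = k}. semigroup Q t f0 (phi (nths xs S')))"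
      unfolding ck_def by simp
  qed
  finally show ?thesis unfolding n_def .
qed

end

lemma valid_sub:
  assumes v: "valid N Lam (phi xs)" and d: "\<forall>k\<in>Lam. \<forall>j\<le>k. j \<in> Lam"
  shows "valid N Lam (phi (nths xs S))"
proof -
  have le: "phi (nths xs S) u \<le> phi xs u" for u
  proof -
    have "phi (nths xs S) u = card {i. i < length xs \<and> i \<in> S \<and> xs ! i = u}" by (rule phi_nths)
    also have "\<dots> \<le> card {i. i < length xs \<and> i \<in> UNIV \<and> xs ! i = u}"
      by (rule card_mono) (simp, blast)
    also have "\<dots> = phi (nths xs UNIV) u" by (rule phi_nths[symmetric])
    also have "nths xs UNIV = xs" by (rule nths_all) (rule allI, rule impI, rule UNIV_I)
    finally show ?thesis .
  qed
  show ?thesis unfolding valid_def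
  proof (intro conjI allI impI ballI)
    fix y :: nat assume "y \<notin> {0..N+1}"
    then have "phi xs y = 0" using v unfolding valid_def by blast
    then show "phi (nths xs S) y = 0" using le[of y] by (metis le_zero_eq)
  next
    fix i assume "i \<in> {1..N}"
    then have "phi xs i \<in> Lam" using v unfolding valid_def by blast
    then have L2: "\<forall>j\<le>phi xs i. j \<in> Lam" using d by blast
    show "phi (nths xs S) i \<in> Lam" by (rule L2[rule_format, OF le[of i]])
  qed
qed

lemma set_nths_sub: "set xs \<subseteq> A \<Longrightarrow> set (nths xs S) \<subseteq> A"
  by (rule subset_trans[OF set_nths_subset])

context setting begin

lemma phi_SL: "set ys \<subseteq> {0..N+1} \<Longrightarrow> valid N Lam (phi ys) \<Longrightarrow> phi ys \<in> SL (length ys)"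
  unfolding SL_def using tot_phi by simp

lemma phi_SI: "set ys \<subseteq> {0..N+1} \<Longrightarrow> phi ys \<in> SI (length ys)"
  unfolding SI_def using tot_phi supp_phi by simp

lemma limL:
  assumes xs: "set xs \<subseteq> {0..N+1}" and v: "valid N Lam (phi xs)"
  shows "((\<lambda>t. semigroup QL t f0 (phi (nths xs S'))) \<longlongrightarrow> absorb_gf QL (phi (nths xs S')) 0) at_top"
proof -
  have "phi (nths xs S') \<in> SL (length (nths xs S'))"
    by (rule phi_SL[OF set_nths_sub[OF xs] valid_sub[OF v Ldown]])
  then obtain L where L: "((\<lambda>t. semigroup QL t f0 (phi (nths xs S'))) \<longlongrightarrow> L) at_top" using convL by blast
  moreover have "absorb_gf QL (phi (nths xs S')) 0 = L"
    unfolding absorb_gf_def using tendsto_Lim[OF trivial_limit_at_top_linorder L] by (simp add: f0_def)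
  ultimately show ?thesis by simp
qed

lemma limI:
  assumes xs: "set xs \<subseteq> {0..N+1}"
  shows "((\<lambda>t. semigroup QI t f0 (phi (nths xs S'))) \<longlongrightarrow> absorb_gf QI (phi (nths xs S')) 0) at_top"
proof -
  have "phi (nths xs S') \<in> SI (length (nths xs S'))"
    by (rule phi_SI[OF set_nths_sub[OF xs]])
  then obtain L where L: "((\<lambda>t. semigroup QI t f0 (phi (nths xs S'))) \<longlongrightarrow> L) at_top" using convI by blast
  moreover have "absorb_gf QI (phi (nths xs S')) 0 = L"
    unfolding absorb_gf_def using tendsto_Lim[OF trivial_limit_at_top_linorder L] by (simp add: f0_def)
  ultimately show ?thesis by simp
qed

lemma expandL:
  fixes z :: real
  assumes xs: "set xs \<subseteq> {0..N+1}" and v: "valid N Lam (phi xs)"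
  shows "absorb_gf QL (phi xs) z = (\<Sum>k\<in>{0..length xs}. z ^ (length xs - k) * (1 - z) ^ k *
        (\<Sum>S'\<in>{S'. S' \<subseteq> {..<length xs} \<and> card S' = k}. absorb_gf QL (phi (nths xs S')) 0))"
proof -
  have ft: "semigroup QL t (\<lambda>\<zeta>. z ^ \<zeta> 0) (phi xs) =
    (\<Sum>k\<in>{0..length xs}. z ^ (length xs - k) * (1 - z) ^ k *
        (\<Sum>S'\<in>{S'. S' \<subseteq> {..<length xs} \<and> card S' = k}. semigroup QL t f0 (phi (nths xs S'))))" for t
    by (rule gfam.finite_time[OF gfamL xs phi_SL[OF xs v]]) (simp add: SL_def valid_supp[of N Lam])
  have "((\<lambda>t. semigroup QL t (\<lambda>\<zeta>. z ^ \<zeta> 0) (phi xs)) \<longlongrightarrow>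
     (\<Sum>k\<in>{0..length xs}. z ^ (length xs - k) * (1 - z) ^ k *
        (\<Sum>S'\<in>{S'. S' \<subseteq> {..<length xs} \<and> card S' = k}. absorb_gf QL (phi (nths xs S')) 0))) at_top"
    unfolding ft by (intro tendsto_sum tendsto_mult_left limL[OF xs v])
  then show ?thesis unfolding absorb_gf_def by (rule tendsto_Lim[OF trivial_limit_at_top_linorder])
qed

lemma expandI:
  fixes z :: real
  assumes xs: "set xs \<subseteq> {0..N+1}"
  shows "absorb_gf QI (phi xs) z = (\<Sum>k\<in>{0..length xs}. z ^ (length xs - k) * (1 - z) ^ k *
        (\<Sum>S'\<in>{S'. S' \<subseteq> {..<length xs} \<and> card S' = k}. absorb_gf QI (phi (nths xs S')) 0))"
proof -
  have ft: "semigroup QI t (\<lambda>\<zeta>. z ^ \<zeta> 0) (phi xs) =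
    (\<Sum>k\<in>{0..length xs}. z ^ (length xs - k) * (1 - z) ^ k *
        (\<Sum>S'\<in>{S'. S' \<subseteq> {..<length xs} \<and> card S' = k}. semigroup QI t f0 (phi (nths xs S'))))" for t
    by (rule gfam.finite_time[OF gfamI xs phi_SI[OF xs]]) (simp add: SI_def)
  have "((\<lambda>t. semigroup QI t (\<lambda>\<zeta>. z ^ \<zeta> 0) (phi xs)) \<longlongrightarrow>
     (\<Sum>k\<in>{0..length xs}. z ^ (length xs - k) * (1 - z) ^ k *
        (\<Sum>S'\<in>{S'. S' \<subseteq> {..<length xs} \<and> card S' = k}. absorb_gf QI (phi (nths xs S')) 0))) at_top"
    unfolding ft by (intro tendsto_sum tendsto_mult_left limI[OF xs])
  then show ?thesis unfolding absorb_gf_def by (rule tendsto_Lim[OF trivial_limit_at_top_linorder])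
qed

end

context gform begin

lemma Q_single: "\<eta> \<in> S \<Longrightarrow> S \<subseteq> {\<eta>} \<Longrightarrow> Q h \<eta> = 0"
  unfolding Qeq by (rule sum.neutral) (metis Tin mult_zero_left singletonD subsetD diff_self mult_zero_right)

lemma sg_single:
  assumes e: "\<eta> \<in> S" and s: "S \<subseteq> {\<eta>}"
  shows "semigroup Q t g \<eta> = g \<eta>"
proof -
  have "semigroup Q t g \<eta> = (\<Sum>k\<in>{0}. t ^ k / fact k * (Q ^^ k) g \<eta>)"
    unfolding semigroup_def
  proof (rule suminf_finite)
    fix k :: nat assume "k \<notin> {0}"
    then obtain m where "k = Suc m" by (cases k) auto
    then show "t ^ k / fact k * (Q ^^ k) g \<eta> = 0" using Q_single[OF e s] by simp
  qed simp
  then show ?thesis by simp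
qed

lemma rep:
  assumes e: "\<eta> \<in> S" and U: "finite U" "S \<subseteq> U"
  shows "Q h \<eta> = (\<Sum>\<zeta>\<in>U - {\<eta>}. Q (\<lambda>\<xi>. if \<xi> = \<zeta> then 1 else 0) \<eta> * (h \<zeta> - h \<eta>))"
proof -
  have qz: "Q (\<lambda>\<xi>. if \<xi> = \<zeta> then 1 else 0) \<eta> = (\<Sum>p\<in>P \<eta>. w \<eta> p * (if T \<eta> p = \<zeta> then 1 else 0))"
    if "\<zeta> \<in> U - {\<eta>}" for \<zeta>
    unfolding Qeq[OF e] using that by (intro sum.cong refl) auto
  have "(\<Sum>\<zeta>\<in>U - {\<eta>}. Q (\<lambda>\<xi>. if \<xi> = \<zeta> then 1 else 0) \<eta> * (h \<zeta> - h \<eta>)) =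
      (\<Sum>\<zeta>\<in>U - {\<eta>}. \<Sum>p\<in>P \<eta>. w \<eta> p * (if T \<eta> p = \<zeta> then h \<zeta> - h \<eta> else 0))"
    by (intro sum.cong refl) (simp add: qz sum_distrib_right, intro sum.cong refl, simp)
  also have "\<dots> = (\<Sum>p\<in>P \<eta>. \<Sum>\<zeta>\<in>U - {\<eta>}. w \<eta> p * (if T \<eta> p = \<zeta> then h \<zeta> - h \<eta> else 0))"
    by (rule sum.swap)
  also have "\<dots> = (\<Sum>p\<in>P \<eta>. w \<eta> p * (h (T \<eta> p) - h \<eta>))"
  proof (rule sum.cong[OF refl])
    fix p assume p: "p \<in> P \<eta>"
    have "(\<Sum>\<zeta>\<in>U - {\<eta>}. w \<eta> p * (if T \<eta> p = \<zeta> then h \<zeta> - h \<eta> else 0)) =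
        w \<eta> p * (if T \<eta> p \<in> U - {\<eta>} then h (T \<eta> p) - h \<eta> else 0)"
      unfolding sum_distrib_left[symmetric] using U(1) by simp
    also have "\<dots> = w \<eta> p * (h (T \<eta> p) - h \<eta>)"
    proof (cases "w \<eta> p = 0")
      case False
      then have "T \<eta> p \<in> U" using Tin[OF e p] U(2) by blast
      then show ?thesis by auto
    qed simp
    finally show "(\<Sum>\<zeta>\<in>U - {\<eta>}. w \<eta> p * (if T \<eta> p = \<zeta> then h \<zeta> - h \<eta> else 0)) = w \<eta> p * (h (T \<eta> p) - h \<eta>)" .
  qed
  finally show ?thesis unfolding Qeq[OF e] by simp
qed

lemma rate_in:
  assumes e: "\<eta> \<in> S" and ne: "\<zeta> \<noteq> \<eta>" and q: "Q (\<lambda>\<xi>. if \<xi> = \<zeta> then 1 else 0) \<eta> \<noteq> 0"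
  shows "\<zeta> \<in> S"
proof -
  have "(\<Sum>p\<in>P \<eta>. w \<eta> p * ((if T \<eta> p = \<zeta> then 1 else 0) - (if \<eta> = \<zeta> then 1 else 0))) \<noteq> 0"
    using q unfolding Qeq[OF e] .
  then obtain p where p: "p \<in> P \<eta>" "w \<eta> p * ((if T \<eta> p = \<zeta> then 1 else 0) - (if \<eta> = \<zeta> then 1 else 0)) \<noteq> 0"
    by (meson sum.neutral)
  then have "w \<eta> p \<noteq> 0" "T \<eta> p = \<zeta>" using ne by (auto split: if_splits)
  then show ?thesis using Tin[OF e p(1)] by simp
qed

end

lemma delta_inj: "delta a = delta b \<Longrightarrow> a = b"
  unfolding delta_def by (metis zero_neq_one)

lemma tot_delta: "a \<in> {0..N+1} \<Longrightarrow> tot N (delta a) = 1"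
  unfolding tot_def delta_def by simp

lemma supp_delta: "a \<in> {0..N+1} \<Longrightarrow> supp N (delta a)"
  unfolding supp_def delta_def by auto

lemma tot1_delta:
  assumes s: "supp N \<eta>" and t: "tot N \<eta> = 1"
  shows "\<exists>a\<in>{0..N+1}. \<eta> = delta a"
proof -
  have "(\<Sum>x\<in>{0..N+1}. \<eta> x) \<noteq> 0" using t unfolding tot_def by simp
  then obtain a where a: "a \<in> {0..N+1}" "\<eta> a \<noteq> 0" by (meson sum.neutral)
  have "\<eta> = delta a"
  proof
    fix x
    show "\<eta> x = delta a x"
    proof (cases "x \<in> {0..N+1}")
      case False then show ?thesis using s a unfolding supp_def delta_def by auto
    next
      case True
      have "tot N \<eta> = \<eta> a + (\<Sum>y\<in>{0..N+1} - {a}. \<eta> y)"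
        unfolding tot_def using a(1) by (rule sum.remove[OF finite_atLeastAtMost])
      then have ea: "\<eta> a = 1" and rest: "(\<Sum>y\<in>{0..N+1} - {a}. \<eta> y) = 0" using t a(2) by linarith+
      show ?thesis
      proof (cases "x = a")
        case True then show ?thesis using ea by (simp add: delta_def)
      next
        case False
        then have "x \<in> {0..N+1} - {a}" using \<open>x \<in> {0..N+1}\<close> by simp
        then have "\<eta> x = 0" using rest by simp
        then show ?thesis using False by (simp add: delta_def)
      qed
    qed
  qed
  then show ?thesis using a(1) by blast
qed

context setting begin

lemma zero_SL: "(\<lambda>_. 0) \<in> SL 0" unfolding SL_def valid_def tot_def using L0 by simp
lemma zero_SI: "(\<lambda>_. 0) \<in> SI 0" unfolding SI_def supp_def tot_def by simp

lemma SI0: "SI 0 \<subseteq> {(\<lambda>_. 0)}"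
proof
  fix \<eta> assume e: "\<eta> \<in> SI 0"
  have "\<eta> = (\<lambda>_. 0)"
  proof
    fix x show "\<eta> x = 0"
    proof (cases "x \<in> {0..N+1}")
      case True then show ?thesis using le_tot[OF True, of \<eta>] e by (simp add: SI_def)
    next
      case False then show ?thesis using e by (simp add: SI_def supp_def)
    qed
  qed
  then show "\<eta> \<in> {(\<lambda>_. 0)}" by simp
qed

lemma SL_SI: "SL n \<subseteq> SI n" unfolding SL_def SI_def using valid_supp by blast

lemma zero_same: "semigroup QL t g (\<lambda>_. 0) = semigroup QI t g (\<lambda>_. 0)"
  using gform.sg_single[OF gformL zero_SL, of t g] gform.sg_single[OF gformI zero_SI, of t g] SI0 SL_SI[of 0]
  by simp

lemma delta_SL: "a \<in> {0..N+1} \<Longrightarrow> valid N Lam (delta a) \<Longrightarrow> delta a \<in> SL 1"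
  unfolding SL_def using tot_delta by simp

lemma delta_SI: "a \<in> {0..N+1} \<Longrightarrow> delta a \<in> SI 1"
  unfolding SI_def using tot_delta supp_delta by simp

lemma SI1: "SI 1 \<subseteq> delta ` {0..N+1}"
  using tot1_delta unfolding SI_def by blast

lemma sum_delta_reindex:
  assumes a: "a \<in> {0..N+1}"
  shows "(\<Sum>\<zeta>\<in>delta ` {0..N+1} - {delta a}. F \<zeta>) = (\<Sum>y\<in>{0..N+1} - {a}. F (delta y))"
proof -
  have "delta ` {0..N+1} - {delta a} = delta ` ({0..N+1} - {a})" using delta_inj by blast
  moreover have "inj_on delta ({0..N+1} - {a})" using delta_inj by (meson inj_onI)
  ultimately show ?thesis by (simp add: sum.reindex)
qed

lemma QL_delta:
  assumes a: "a \<in> {0..N+1}" and v: "valid N Lam (delta a)"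
  shows "QL h (delta a) = (\<Sum>y\<in>{0..N+1} - {a}. rw_rate N Lam c r a y * (h (delta y) - h (delta a)))"
proof -
  have "QL h (delta a) = (\<Sum>\<zeta>\<in>delta ` {0..N+1} - {delta a}.
      QL (\<lambda>\<xi>. if \<xi> = \<zeta> then 1 else 0) (delta a) * (h \<zeta> - h (delta a)))"
    by (rule gform.rep[OF gformL delta_SL[OF a v]]) (use SL_SI SI1 in blast)+
  also have "\<dots> = (\<Sum>y\<in>{0..N+1} - {a}. rw_rate N Lam c r a y * (h (delta y) - h (delta a)))"
    unfolding sum_delta_reindex[OF a] rw_rate_def ..
  finally show ?thesis .
qed

lemma QI_delta:
  assumes a: "a \<in> {0..N+1}"
  shows "QI h (delta a) = (\<Sum>y\<in>{0..N+1} - {a}. rw_rate N Lam c r a y * (h (delta y) - h (delta a)))"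
proof -
  let ?G = "\<lambda>x. \<Sum>y\<in>{0..N+1} - {x}. real (delta a x) * rw_rate N Lam c r x y *
      (h ((delta a)(x := delta a x - 1, y := delta a y + 1)) - h (delta a))"
  have "QI h (delta a) = ?G a + (\<Sum>x\<in>{0..N+1} - {a}. ?G x)"
    unfolding genIRW_def by (rule sum.remove[OF finite_atLeastAtMost a])
  moreover have "(\<Sum>x\<in>{0..N+1} - {a}. ?G x) = 0"
    by (rule sum.neutral) (simp add: delta_def)
  moreover have "?G a = (\<Sum>y\<in>{0..N+1} - {a}. rw_rate N Lam c r a y * (h (delta y) - h (delta a)))"
  proof (rule sum.cong[OF refl])
    fix y assume y: "y \<in> {0..N+1} - {a}"
    have "(delta a)(a := delta a a - 1, y := delta a y + 1) = delta y"
      using y by (auto simp: delta_def fun_eq_iff)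
    then show "real (delta a a) * rw_rate N Lam c r a y * (h ((delta a)(a := delta a a - 1, y := delta a y + 1)) - h (delta a)) =
        rw_rate N Lam c r a y * (h (delta y) - h (delta a))" by (simp add: delta_def)
  qed
  ultimately show ?thesis by simp
qed

lemma pow_delta:
  "\<forall>a\<in>{0..N+1}. valid N Lam (delta a) \<longrightarrow> (QL ^^ k) g (delta a) = (QI ^^ k) g (delta a)"
proof (induction k)
  case 0 then show ?case by simp
next
  case (Suc k)
  show ?case
  proof (intro ballI impI)
    fix a assume a: "a \<in> {0..N+1}" and v: "valid N Lam (delta a)"
    have "(QL ^^ Suc k) g (delta a) = QL ((QL ^^ k) g) (delta a)" by simp
    also have "\<dots> = (\<Sum>y\<in>{0..N+1} - {a}. rw_rate N Lam c r a y * ((QL ^^ k) g (delta y) - (QL ^^ k) g (delta a)))"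
      by (rule QL_delta[OF a v])
    also have "\<dots> = (\<Sum>y\<in>{0..N+1} - {a}. rw_rate N Lam c r a y * ((QI ^^ k) g (delta y) - (QI ^^ k) g (delta a)))"
    proof (rule sum.cong[OF refl])
      fix y assume y: "y \<in> {0..N+1} - {a}"
      show "rw_rate N Lam c r a y * ((QL ^^ k) g (delta y) - (QL ^^ k) g (delta a)) =
          rw_rate N Lam c r a y * ((QI ^^ k) g (delta y) - (QI ^^ k) g (delta a))"
      proof (cases "rw_rate N Lam c r a y = 0")
        case False
        have ne: "delta y \<noteq> delta a" using y delta_inj by blast
        have "delta y \<in> SL 1"
          by (rule gform.rate_in[OF gformL delta_SL[OF a v] ne]) (use False in \<open>simp add: rw_rate_def\<close>)
        then have vy: "valid N Lam (delta y)" by (simp add: SL_def)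
        have "(QL ^^ k) g (delta y) = (QI ^^ k) g (delta y)" using Suc y vy by blast
        moreover have "(QL ^^ k) g (delta a) = (QI ^^ k) g (delta a)" using Suc a v by blast
        ultimately show ?thesis by simp
      qed simp
    qed
    also have "\<dots> = QI ((QI ^^ k) g) (delta a)" by (rule QI_delta[OF a, symmetric])
    finally show "(QL ^^ Suc k) g (delta a) = (QI ^^ Suc k) g (delta a)" by simp
  qed
qed

lemma calG_small:
  assumes xs: "set xs \<subseteq> {0..N+1}" and v: "valid N Lam (phi xs)"
    and S': "S' \<subseteq> {..<length xs}" and c1: "card S' \<le> 1"
  shows "calG N Lam c r (phi (nths xs S')) 0 = 0"
proof -
  have fin: "finite S'" using S' finite_subset by blast
  have same: "semigroup QL t (\<lambda>\<zeta>. 0 ^ \<zeta> 0) (phi (nths xs S')) = semigroup QI t (\<lambda>\<zeta>. 0 ^ \<zeta> 0) (phi (nths xs S'))" for t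
  proof (cases "card S' = 0")
    case True
    then have "S' = {}" using fin by simp
    then have "phi (nths xs S') = (\<lambda>_. 0)" by (simp add: phi_Nil)
    then show ?thesis using zero_same by simp
  next
    case False
    then have "card S' = 1" using c1 by simp
    then obtain i where i: "S' = {i}" by (meson card_1_singletonE)
    then have il: "i < length xs" using S' by auto
    have pd: "phi (nths xs S') = delta (xs ! i)"
    proof
      fix u
      have "phi (nths xs S') u = card {j \<in> {i}. xs ! j = u}" using phi_nths'[OF S'] i by simp
      also have "{j \<in> {i}. xs ! j = u} = (if xs ! i = u then {i} else {})" by auto
      also have "card (if xs ! i = u then {i} else {}) = delta (xs ! i) u" by (simp add: delta_def)
      finally show "phi (nths xs S') u = delta (xs ! i) u" .
    qed
    have aD: "xs ! i \<in> {0..N+1}" using xs il nth_mem by blast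
    have va: "valid N Lam (delta (xs ! i))" using valid_sub[OF v Ldown, of S'] pd by simp
    have "\<And>k. (QL ^^ k) (\<lambda>\<zeta>. 0 ^ \<zeta> 0) (delta (xs ! i)) = (QI ^^ k) (\<lambda>\<zeta>. 0 ^ \<zeta> 0) (delta (xs ! i))"
      using pow_delta aD va by blast
    then show ?thesis unfolding pd semigroup_def by simp
  qed
  show ?thesis unfolding calG_def absorb_gf_def same by simp
qed

end

theorem theorem5p9:
  fixes N :: nat and Lam :: "nat set" and c :: "conf \<Rightarrow> conf \<Rightarrow> real"
    and r :: "nat \<Rightarrow> nat \<Rightarrow> real" and xs :: "nat list" and z :: real
  assumes "0 \<in> Lam" and "\<forall>k\<in>Lam. \<forall>j\<le>k. j \<in> Lam"
    and "\<forall>m. \<forall>\<xi>\<in>OmegaV N Lam m. \<forall>\<xi>'\<in>OmegaV N Lam m. 0 \<le> c \<xi> \<xi>'"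
    and "\<forall>i\<in>{1..N}. \<forall>j\<in>{0, N+1}. 0 \<le> r i j"
    and "consistent N Lam c r"
    and "set xs \<subseteq> {0..N+1}" and "valid N Lam (phi xs)"
    and "0 \<le> z"
  shows "calG N Lam c r (phi xs) z =
    (\<Sum>\<kappa>=2..length xs. z ^ (length xs - \<kappa>) * (1 - z) ^ \<kappa> *
       (\<Sum>S\<in>{S. S \<subseteq> {..<length xs} \<and> card S = \<kappa>}. calG N Lam c r (phi (nths xs S)) 0))"
proof -
  interpret setting N Lam c r
    by (rule setting.intro) (rule assms(1), rule assms(2), rule assms(3), rule assms(4), rule assms(5))
  have xs: "set xs \<subseteq> {0..N+1}" by (rule assms(6))
  have v: "valid N Lam (phi xs)" by (rule assms(7))
  let ?a = "\<lambda>k. z ^ (length xs - k) * (1 - z) ^ k"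
  let ?T = "\<lambda>k. {S. S \<subseteq> {..<length xs} \<and> card S = k}"
  have "calG N Lam c r (phi xs) z =
      (\<Sum>k\<in>{0..length xs}. ?a k * (\<Sum>S\<in>?T k. calG N Lam c r (phi (nths xs S)) 0))"
    unfolding calG_def sum_subtractf right_diff_distrib expandL[OF xs v] expandI[OF xs] ..
  also have "\<dots> = (\<Sum>k\<in>{2..length xs}. ?a k * (\<Sum>S\<in>?T k. calG N Lam c r (phi (nths xs S)) 0))"
  proof (rule sum.mono_neutral_right)
    show "finite {0..length xs}" by simp
    show "{2..length xs} \<subseteq> {0..length xs}" by auto
    show "\<forall>k\<in>{0..length xs} - {2..length xs}. ?a k * (\<Sum>S\<in>?T k. calG N Lam c r (phi (nths xs S)) 0) = 0"
    proof
      fix k assume "k \<in> {0..length xs} - {2..length xs}"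
      then have k: "k \<le> 1" by auto
      have "(\<Sum>S\<in>?T k. calG N Lam c r (phi (nths xs S)) 0) = 0"
      proof (rule sum.neutral, rule ballI)
        fix S assume "S \<in> ?T k"
        then have "S \<subseteq> {..<length xs}" "card S \<le> 1" using k by auto
        then show "calG N Lam c r (phi (nths xs S)) 0 = 0" by (rule calG_small[OF xs v])
      qed
      then show "?a k * (\<Sum>S\<in>?T k. calG N Lam c r (phi (nths xs S)) 0) = 0" by simp
    qed
  qed
  finally show ?thesis .
qed

end
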